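(* Let $x_j\to x_0$ in $\mathbb{T}^1$ and $y_j\to y_0$ with $y_j,y_0\in[0,1]$ (convergence in $\mathbb{R}$). Then for every integer $n\ge0$, $$\mu^n_{x_0}[0,y_0)\le\liminf_{j\to\infty}\mu^n_{x_j}[0,y_j]\le\limsup_{j\to\infty}\mu^n_{x_j}[0,y_j]\le\mu^n_{x_0}[0,y_0],$$ and $$\mu_{x_0}[0,y_0)\le\liminf_{j\to\infty}\mu_{x_j}[0,y_j]\le\limsup_{j\to\infty}\mu_{x_j}[0,y_j]\le\mu_{x_0}[0,y_0].$$ In particular, if $(x,y)\mapsto\mu_x[0,y]$ is discontinuous at $(x_0,y_0)$ then $\mu_{x_0}(\{y_0\})>0$.
   Context: Notation: $\mathbb{T}^1=\mathbb{R}/\mathbb{Z}$, $\mathbb{T}^2=\mathbb{T}^1\times\mathbb{T}^1$, $\lambda$ is Lebesgue probability measure on $\mathbb{T}^1$. For reals $a\le b\le a+1$, $[a,b]$ (resp. $[a,b)$) denotes the image in $\mathbb{T}^1$ of the real interval $[a,b]$ (resp. $[a,b)$); so $[0,1]=\mathbb{T}^1$, $[0,0]=\{0\}$. $P(x,y)=(x+\tfrac12,1-y)$ on $\mathbb{T}^2$. Standing setup: $\alpha$ is irrational, $R(x)=x+\alpha$ on $\mathbb{T}^1$. $r:\mathbb{T}^1\to\mathbb{R}$ is continuous with $r(x+\tfrac12)=-r(x)$, $r(0)=r(\tfrac12)=0$, $0<r(x)<\tfrac14$ for $x\in(0,\tfrac12)$, and such that $S(x,y)=(x+\alpha,\,y+r(x))$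 is a minimal homeomorphism of $\mathbb{T}^2$. Put $\sigma_x(y)=y+r(x)$, $\sigma_x^0=\mathrm{id}$, $\sigma^n_x=\sigma_{R^{n-1}(x)}\circ\cdots\circ\sigma_{R(x)}\circ\sigma_x$ ($n\ge1$), so $S^n(x,y)=(R^n(x),\sigma^n_x(y))$. Fix $x_1^*\in(0.1,0.2)\cap\mathbb{Q}$, $x_2^*=x_1^*+\tfrac12$, $y_1^*\in\mathbb{T}^1$, $y_2^*=1-y_1^*$, $z_j^*=(x_j^*,y_j^* )$, such that for all $m\in\mathbb{Z}$ and $j=1,2$ the second coordinate $Y$ of $S^m(z_j^* )$ satisfies $Y\neq0$ and $Y\ne -r(R^m(x_j^* ))$. Fix $\bar x_1<x_1^*<\bar x_2$ with $[\bar x_1,\bar x_2]\subset(0,\tfrac12)$ and continuous $\tilde\psi,\tilde\phi:[\bar x_1,\bar x_2]\to[0,1]$ with $\tilde\psi(\bar x_1)=0$, $\tilde\phi(\bar x_1)=1$, $\tilde\psi(\bar x_2)=1$, $\tilde\phi(\bar x_2)=0$, $\tilde\psi<\tilde\phi$ on $[\bar x_1,x_1^* )$, $\tilde\psi>\tilde\phi$ on $(x_1^*,\bar x_2]$, and $\tilde\psi(x_1^* )=\tilde\phi(x_1^* )\equiv y_1^*\pmod 1$. Define Borel probability measures $\mu_x^0$ on $\mathbb{T}^1$: $\mu^0_x=\lambda$ if $x\notin(\bar x_1,\bar x_2)\cup(\bar x_1+\tfrac12,\bar x_2+\tfrac12)$; $\mu^0_{x_j^*}=\delta_{y_j^*}$;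 for $x\in(\bar x_1,\bar x_2)\setminus\{x_1^*\}$, $\mu^0_x(A)=\lambda(A\cap I_x)/|\tilde\phi(x)-\tilde\psi(x)|$ where $I_x$ is the image in $\mathbb{T}^1$ of the real interval with endpoints $\tilde\psi(x),\tilde\phi(x)$; for $x=u+\tfrac12$ with $u\in(\bar x_1,\bar x_2)\setminus\{x_1^*\}$, $\mu^0_x(A)=\mu^0_u(\{1-y:y\in A\})$. For $n\ge0$ let $\mu^n_x(A)=\mu^0_{R^n(x)}(\sigma^n_x(A))$, and $\mu_x=\tfrac12\big(\lambda+\sum_{n\ge0}2^{-n-1}\mu^n_x\big)$. *)

theory Defs
  imports "HOL-Analysis.Analysis"
begin

text \<open>Conventions. A point of the circle T1 = R/Z is represented by any real
lift; a subset A of real numbers represents its image in T1.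
All functions on T1 below are 1-periodic in their real arguments.\<close>

definition per :: "real set \<Rightarrow> real set" where
  "per A = {t. \<exists>k::int. t + of_int k \<in> A}"

definition leb :: "real set \<Rightarrow> real" where
  "leb A = measure lborel (per A \<inter> {0..<1})"

definition dirac :: "real \<Rightarrow> real set \<Rightarrow> real" where
  "dirac y A = (if y \<in> per A then 1 else 0)"

definition tdist :: "real \<Rightarrow> real \<Rightarrow> real" where
  "tdist a b = \<bar>(a - b) - of_int (round (a - b))\<bar>"

text \<open>mu^0_u for u in (xb1,xb2) minus x1s: normalized Lebesgue on the arc I_u
  between psi u and phi u.\<close>
definition mu0_left :: "(real \<Rightarrow> real) \<Rightarrow> (real \<Rightarrow> real) \<Rightarrow> real \<Rightarrow> real set \<Rightarrow> real" where
  "mu0_left psi phi u A =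
     leb (per A \<inter> per {min (psi u) (phi u) .. max (psi u) (phi u)}) / \<bar>phi u - psi u\<bar>"

definition mu0 :: "real \<Rightarrow> real \<Rightarrow> real \<Rightarrow> real \<Rightarrow> (real \<Rightarrow> real) \<Rightarrow> (real \<Rightarrow> real)
                   \<Rightarrow> real \<Rightarrow> real set \<Rightarrow> real" where
  "mu0 xb1 xb2 x1s y1s psi phi x A =
     (let u = frac x in
      if u = x1s then dirac y1s A
      else if u = x1s + 1/2 then dirac (1 - y1s) A
      else if xb1 < u \<and> u < xb2 then mu0_left psi phi u A
      else if xb1 + 1/2 < u \<and> u < xb2 + 1/2
        then mu0_left psi phi (u - 1/2) ((\<lambda>y. 1 - y) ` A)
      else leb A)"

text \<open>sigma^n_x(y) = y + shift, with shift = sum_{k<n} r(R^k x).\<close>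
definition cocycle :: "real \<Rightarrow> (real \<Rightarrow> real) \<Rightarrow> nat \<Rightarrow> real \<Rightarrow> real" where
  "cocycle \<alpha> r n x = (\<Sum>k<n. r (x + real k * \<alpha>))"

definition mun :: "real \<Rightarrow> (real \<Rightarrow> real) \<Rightarrow> real \<Rightarrow> real \<Rightarrow> real \<Rightarrow> real \<Rightarrow> (real \<Rightarrow> real)
                   \<Rightarrow> (real \<Rightarrow> real) \<Rightarrow> nat \<Rightarrow> real \<Rightarrow> real set \<Rightarrow> real" where
  "mun \<alpha> r xb1 xb2 x1s y1s psi phi n x A =
     mu0 xb1 xb2 x1s y1s psi phi (x + real n * \<alpha>) ((\<lambda>y. y + cocycle \<alpha> r n x) ` A)"

definition mu :: "real \<Rightarrow> (real \<Rightarrow> real) \<Rightarrow> real \<Rightarrow> real \<Rightarrow> real \<Rightarrow> real \<Rightarrow> (real \<Rightarrow> real)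
                   \<Rightarrow> (real \<Rightarrow> real) \<Rightarrow> real \<Rightarrow> real set \<Rightarrow> real" where
  "mu \<alpha> r xb1 xb2 x1s y1s psi phi x A =
     (leb A + (\<Sum>n. (1/2) ^ (n + 1) * mun \<alpha> r xb1 xb2 x1s y1s psi phi n x A)) / 2"

definition Smap :: "real \<Rightarrow> (real \<Rightarrow> real) \<Rightarrow> real \<times> real \<Rightarrow> real \<times> real" where
  "Smap \<alpha> r z = (fst z + \<alpha>, snd z + r (fst z))"

definition Sinv :: "real \<Rightarrow> (real \<Rightarrow> real) \<Rightarrow> real \<times> real \<Rightarrow> real \<times> real" where
  "Sinv \<alpha> r z = (fst z - \<alpha>, snd z - r (fst z - \<alpha>))"

definition Spow :: "real \<Rightarrow> (real \<Rightarrow> real) \<Rightarrow> int \<Rightarrow> real \<times> real \<Rightarrow> real \<times> real" where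
  "Spow \<alpha> r m = (if 0 \<le> m then Smap \<alpha> r ^^ nat m else Sinv \<alpha> r ^^ nat (- m))"

text \<open>Minimality of S on T2: every closed S-invariant subset of T2 (represented as
  a Z^2-periodic closed subset of R^2) is empty or everything.\<close>
definition minimal_S :: "real \<Rightarrow> (real \<Rightarrow> real) \<Rightarrow> bool" where
  "minimal_S \<alpha> r \<longleftrightarrow>
     (\<forall>K :: (real \<times> real) set.
        closed K
        \<and> (\<forall>x y. (x, y) \<in> K \<longleftrightarrow> (x + 1, y) \<in> K)
        \<and> (\<forall>x y. (x, y) \<in> K \<longleftrightarrow> (x, y + 1) \<in> K)
        \<and> Smap \<alpha> r ` K = K
        \<longrightarrow> K = {} \<or> K = UNIV)"

end

theory Submission
  imports Defs
begin

lemma per_iff: "t \<in> per A \<longleftrightarrow> (\<exists>k::int. t + of_int k \<in> A)"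
  by (simp add: per_def)

lemma per_per[simp]: "per (per A) = per A"
  unfolding per_def
  apply auto
   apply (metis add.assoc of_int_add)
  by (metis add.right_neutral of_int_0)

lemma per_Un: "per (A \<union> B) = per A \<union> per B"
  unfolding per_def by auto

lemma per_mono: "A \<subseteq> B \<Longrightarrow> per A \<subseteq> per B"
  unfolding per_def by auto

lemma per_Int_per: "per (A \<inter> per B) = per A \<inter> per B"
  unfolding per_def
  apply auto
   apply (metis (no_types, opaque_lifting) add.assoc add_diff_cancel_right' diff_add_cancel of_int_add of_int_diff)
  subgoal for x k ka by (rule exI[of _ k]) (auto intro!: exI[of _ "ka - k"])
  done

lemma per_shift_int: "t + of_int m \<in> per A \<longleftrightarrow> t \<in> per A"
  unfolding per_def
  by auto (metis add.assoc of_int_add, metis add.commute add.left_commute add_diff_cancel_left' diff_add_cancel of_int_add of_int_diff)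

lemma sets_per: assumes "A \<in> sets borel" shows "per A \<in> sets borel"
proof -
  have "per A = (\<Union>k\<in>(UNIV::int set). (\<lambda>t. t + of_int k) -` A)"
    unfolding per_def by auto
  moreover have "(\<lambda>t::real. t + of_int k) -` A \<in> sets borel" for k
    using assms by (intro measurable_sets_borel[OF _ assms]) auto
  ultimately show ?thesis by auto
qed

lemma fm01: "A \<in> sets borel \<Longrightarrow> A \<subseteq> {0..<1::real} \<Longrightarrow> A \<in> fmeasurable lborel"
proof -
  assume a: "A \<in> sets borel" "A \<subseteq> {0..<1::real}"
  have "emeasure lborel A \<le> emeasure lborel {0..<1::real}"
    using a by (intro emeasure_mono) auto
  then show ?thesis using a by (auto simp: fmeasurable_def less_top[symmetric] top_unique dest: order.trans)
qed

lemma leb_nonneg: "0 \<le> leb A" by (simp add: leb_def)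

lemma leb_le1: "leb A \<le> 1"
proof (cases "per A \<inter> {0..<1} \<in> sets borel")
  case True
  have "measure lborel (per A \<inter> {0..<1}) \<le> measure lborel {0..<1::real}"
    by (rule measure_mono_fmeasurable) (use True in \<open>auto intro: fm01\<close>)
  then show ?thesis by (simp add: leb_def)
next
  case False then show ?thesis by (simp add: leb_def measure_notin_sets)
qed

lemma leb_per[simp]: "leb (per A) = leb A" by (simp add: leb_def)

lemma leb_mono: "per A \<subseteq> per B \<Longrightarrow> B \<in> sets borel \<Longrightarrow> leb A \<le> leb B"
proof (cases "per A \<inter> {0..<1} \<in> sets borel")
  case True
  assume "per A \<subseteq> per B" "B \<in> sets borel"
  then show ?thesis unfolding leb_def
    by (intro measure_mono_fmeasurable) (use True in \<open>auto intro!: fm01 sets_per\<close>)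
next
  case False then show ?thesis by (simp add: leb_def measure_notin_sets)
qed

lemma leb_Un: "A \<in> sets borel \<Longrightarrow> B \<in> sets borel \<Longrightarrow> leb (A \<union> B) \<le> leb A + leb B"
  unfolding leb_def per_Un Int_Un_distrib2
  by (intro measure_Un_le) (auto intro!: sets_per)


lemma frac_in01: "0 \<le> z \<Longrightarrow> z < 1 \<Longrightarrow> frac z = z"
  by (simp add: frac_eq)

lemma frac_neg1: "-1 \<le> z \<Longrightarrow> z < 0 \<Longrightarrow> frac z = z + 1"
proof -
  assume "-1 \<le> z" "z < 0"
  then have "frac (z + of_int 1) = z + 1" by (simp add: frac_eq)
  then show ?thesis by (simp add: frac_add_of_int_right[of z 1, simplified])
qed

lemma per_Icc_iff:
  assumes "0 \<le> y" "y \<le> 1"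
  shows "t \<in> per {c..c+y} \<longleftrightarrow> frac (t - c) \<le> y"
proof
  assume "t \<in> per {c..c+y}"
  then obtain k::int where k: "c \<le> t + k" "t + k \<le> c + y" by (auto simp: per_def)
  show "frac (t - c) \<le> y"
  proof (cases "t + k - c < 1")
    case True
    have "frac (t - c) = frac ((t + k - c) + of_int (-k))" by simp
    also have "\<dots> = t + k - c" using True k by (simp only: frac_add_of_int_right frac_eq) simp
    finally show ?thesis using k by simp
  next
    case False
    then show ?thesis using assms frac_lt_1[of "t-c"] k by linarith
  qed
next
  assume h: "frac (t - c) \<le> y"
  have "t + of_int (- \<lfloor>t - c\<rfloor>) = c + frac (t - c)" by (simp add: frac_def)
  then show "t \<in> per {c..c+y}" unfolding per_def using h frac_ge_0[of "t-c"]
    by (intro CollectI exI[of _ "- \<lfloor>t - c\<rfloor>"]) auto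
qed

lemma per_Ico_iff:
  assumes "0 \<le> y" "y \<le> 1"
  shows "t \<in> per {c..<c+y} \<longleftrightarrow> frac (t - c) < y"
proof
  assume "t \<in> per {c..<c+y}"
  then obtain k::int where k: "c \<le> t + k" "t + k < c + y" by (auto simp: per_def)
  have "frac (t - c) = frac ((t + k - c) + of_int (-k))" by simp
  also have "\<dots> = t + k - c" using k assms by (simp only: frac_add_of_int_right frac_eq) simp
  finally show "frac (t - c) < y" using k by simp
next
  assume h: "frac (t - c) < y"
  have "t + of_int (- \<lfloor>t - c\<rfloor>) = c + frac (t - c)" by (simp add: frac_def)
  then show "t \<in> per {c..<c+y}" unfolding per_def using h frac_ge_0[of "t-c"]
    by (intro CollectI exI[of _ "- \<lfloor>t - c\<rfloor>"]) auto
qed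

lemma frac_diff_split:
  assumes "0 \<le> t" "t < 1"
  shows "frac (t - c) = (if frac c \<le> t then t - frac c else t - frac c + 1)"
proof -
  have "t - c = (t - frac c) + of_int (- \<lfloor>c\<rfloor>)" by (simp add: frac_def)
  then have "frac (t - c) = frac (t - frac c)" by (simp only: frac_add_of_int_right)
  moreover have "frac c \<le> t \<Longrightarrow> frac (t - frac c) = t - frac c"
    using assms frac_lt_1[of c] frac_ge_0[of c] by (intro frac_in01) linarith+
  moreover have "\<not> frac c \<le> t \<Longrightarrow> frac (t - frac c) = t - frac c + 1"
    using assms frac_lt_1[of c] frac_ge_0[of c] by (intro frac_neg1) auto
  ultimately show ?thesis by auto
qed

lemma per_UNIV: "per {c..c+1} = UNIV"
  using per_Icc_iff[of 1 _ c] less_imp_le[OF frac_lt_1] by auto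

lemma leb_UNIV: "leb UNIV = 1"
proof -
  have "per UNIV = UNIV" by (auto simp: per_def)
  then show ?thesis unfolding leb_def using measure_lborel_Ico[of 0 "1::real"] by simp
qed

lemma leb_Icc:
  assumes "0 \<le> y" "y \<le> 1"
  shows "leb {c..c+y} = y"
proof (cases "y = 1")
  case True
  have "leb {c..c+y} = leb (per {c..c+1})" using True by simp
  then show ?thesis using True by (simp only: per_UNIV leb_UNIV)
next
  case False
  define f where "f = frac c"
  have f: "0 \<le> f" "f < 1" unfolding f_def by (auto simp: frac_lt_1)
  have S: "per {c..c+y} \<inter> {0..<1} = {t. 0 \<le> t \<and> t < 1 \<and>
      (if f \<le> t then t - f else t - f + 1) \<le> y}"
  proof (rule set_eqI)
    fix t
    show "t \<in> per {c..c+y} \<inter> {0..<1} \<longleftrightarrow> t \<in> {t. 0 \<le> t \<and> t < 1 \<and>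
      (if f \<le> t then t - f else t - f + 1) \<le> y}"
      using per_Icc_iff[OF assms, of t c] frac_diff_split[of t c] unfolding f_def by auto
  qed
  show ?thesis
  proof (cases "f + y < 1")
    case True
    have "per {c..c+y} \<inter> {0..<1} = {f..f+y}" unfolding S using True f assms by auto
    then show ?thesis unfolding leb_def using assms by simp
  next
    case False
    have "per {c..c+y} \<inter> {0..<1} = {f..<1} \<union> {0..f+y-1}" unfolding S using False f assms \<open>y \<noteq> 1\<close> by auto
    moreover have "measure lborel ({f..<1} \<union> {0..f+y-1}) = (1 - f) + (f + y - 1)"
      using False f assms \<open>y \<noteq> 1\<close> by (subst measure_Union) auto
    ultimately show ?thesis unfolding leb_def by simp
  qed
qed

lemma leb_point: "leb {c} = 0"
  using leb_Icc[of 0 c] by simp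

lemma borel_Icc[simp]: "{a..b::real} \<in> sets borel" by simp

lemma leb_Ico:
  assumes "0 \<le> y" "y \<le> 1"
  shows "leb {c..<c+y} = y"
proof -
  have "leb {c..<c+y} \<le> leb {c..c+y}" by (rule leb_mono, rule per_mono) auto
  moreover have "leb {c..c+y} \<le> leb {c..<c+y} + leb {c+y}"
  proof -
    have "{c..c+y} = {c..<c+y} \<union> {c+y}" using assms by auto
    then show ?thesis using leb_Un[of "{c..<c+y}" "{c+y}"] by simp
  qed
  ultimately show ?thesis using leb_Icc[OF assms] leb_point by simp
qed

lemma leb_Ioc:
  assumes "0 \<le> y" "y \<le> 1"
  shows "leb {c<..c+y} = y"
proof -
  have "leb {c<..c+y} \<le> leb {c..c+y}" by (rule leb_mono, rule per_mono) auto
  moreover have "leb {c..c+y} \<le> leb {c<..c+y} + leb {c}"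
  proof -
    have "{c..c+y} = {c<..c+y} \<union> {c}" using assms by auto
    then show ?thesis using leb_Un[of "{c<..c+y}" "{c}"] by (simp add: add.commute)
  qed
  ultimately show ?thesis using leb_Icc[OF assms] leb_point by simp
qed

lemma leb_Icc_le:
  assumes "a \<le> b" shows "leb {a..b} \<le> b - a"
proof (cases "b - a \<le> 1")
  case True
  then show ?thesis using leb_Icc[of "b-a" a] assms by simp
next
  case False then show ?thesis using leb_le1[of "{a..b}"] by simp
qed


lemma leb_mono2: "A \<subseteq> B \<Longrightarrow> B \<in> sets borel \<Longrightarrow> leb A \<le> leb B"
  by (rule leb_mono, rule per_mono)

lemma per_diff_Icc:
  "per {a..b} - per {a'..b'} \<subseteq> per {min a a'..max a a'} \<union> per {min b b'..max b b'}"
proof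
  fix t assume t: "t \<in> per {a..b} - per {a'..b'}"
  then obtain k::int where k: "a \<le> t + k" "t + k \<le> b" by (auto simp: per_def)
  have "\<not> (a' \<le> t + k \<and> t + k \<le> b')" using t by (auto simp: per_def)
  then have "(min a a' \<le> t + k \<and> t + k \<le> max a a') \<or> (min b b' \<le> t + k \<and> t + k \<le> max b b')"
    using k by linarith
  then show "t \<in> per {min a a'..max a a'} \<union> per {min b b'..max b b'}"
    unfolding per_def by auto
qed

lemma leb_minmax: "leb {min a a'..max a a'} \<le> \<bar>a - a'\<bar>"
  using leb_Icc_le[of "min a a'" "max a a'"] by (auto simp: min_def max_def)

lemma W_lip:
  "leb (per {a..b} \<inter> per {p..q}) \<le> leb (per {a'..b'} \<inter> per {p'..q'})
     + \<bar>a - a'\<bar> + \<bar>b - b'\<bar> + \<bar>p - p'\<bar> + \<bar>q - q'\<bar>"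
proof -
  let ?E = "\<lambda>u v. per {min u v..max u v}"
  have sub: "per {a..b} \<inter> per {p..q} \<subseteq> (per {a'..b'} \<inter> per {p'..q'}) \<union> ?E a a' \<union> ?E b b'
      \<union> ?E p p' \<union> ?E q q'"
    using per_diff_Icc[of a b a' b'] per_diff_Icc[of p q p' q'] by blast
  have B: "per X \<in> sets borel" if "X \<in> sets borel" for X using that by (rule sets_per)
  have b1: "per {a'..b'} \<inter> per {p'..q'} \<in> sets borel" by (auto intro!: B sets.Un sets.Int)
  have "leb (per {a..b} \<inter> per {p..q}) \<le> leb ((per {a'..b'} \<inter> per {p'..q'}) \<union> ?E a a' \<union> ?E b b'
      \<union> ?E p p' \<union> ?E q q')"
    by (rule leb_mono2[OF sub]) (auto intro!: B sets.Un sets.Int)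
  also have "\<dots> \<le> leb ((per {a'..b'} \<inter> per {p'..q'}) \<union> ?E a a' \<union> ?E b b' \<union> ?E p p') + leb (?E q q')"
    by (rule leb_Un) (auto intro!: B sets.Un sets.Int)
  also have "\<dots> \<le> leb ((per {a'..b'} \<inter> per {p'..q'}) \<union> ?E a a' \<union> ?E b b') + leb (?E p p') + leb (?E q q')"
    by (intro add_right_mono leb_Un) (auto intro!: B sets.Un sets.Int)
  also have "\<dots> \<le> leb ((per {a'..b'} \<inter> per {p'..q'}) \<union> ?E a a') + leb (?E b b') + leb (?E p p') + leb (?E q q')"
    by (intro add_right_mono leb_Un) (auto intro!: B sets.Un sets.Int)
  also have "\<dots> \<le> leb (per {a'..b'} \<inter> per {p'..q'}) + leb (?E a a') + leb (?E b b') + leb (?E p p') + leb (?E q q')"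
    by (intro add_right_mono leb_Un) (auto intro!: B sets.Un sets.Int)
  also have "\<dots> \<le> leb (per {a'..b'} \<inter> per {p'..q'}) + \<bar>a - a'\<bar> + \<bar>b - b'\<bar> + \<bar>p - p'\<bar> + \<bar>q - q'\<bar>"
    using leb_minmax[of a a'] leb_minmax[of b b'] leb_minmax[of p p'] leb_minmax[of q q'] by simp
  finally show ?thesis .
qed

lemma W_lip_abs:
  "\<bar>leb (per {a..b} \<inter> per {p..q}) - leb (per {a'..b'} \<inter> per {p'..q'})\<bar>
     \<le> \<bar>a - a'\<bar> + \<bar>b - b'\<bar> + \<bar>p - p'\<bar> + \<bar>q - q'\<bar>"
  using W_lip[of a b p q a' b' p' q'] W_lip[of a' b' p' q' a b p q]
  unfolding abs_le_iff by (simp add: abs_minus_commute)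


definition Wf :: "real \<Rightarrow> real \<Rightarrow> real \<Rightarrow> real \<Rightarrow> real" where
  "Wf a b p q = leb (per {a..b} \<inter> per {p..q})"

lemma Wf_tendsto:
  assumes "(a \<longlongrightarrow> a0) F" "(b \<longlongrightarrow> b0) F" "(p \<longlongrightarrow> p0) F" "(q \<longlongrightarrow> q0) F"
  shows "((\<lambda>j. Wf (a j) (b j) (p j) (q j)) \<longlongrightarrow> Wf a0 b0 p0 q0) F"
proof -
  have "((\<lambda>j. \<bar>a j - a0\<bar> + \<bar>b j - b0\<bar> + \<bar>p j - p0\<bar> + \<bar>q j - q0\<bar>) \<longlongrightarrow> 0) F"
    using LIM_zero[OF assms(1)] LIM_zero[OF assms(2)] LIM_zero[OF assms(3)] LIM_zero[OF assms(4)]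
    by (auto intro!: tendsto_add_zero tendsto_rabs_zero)
  then have "((\<lambda>j. Wf (a j) (b j) (p j) (q j) - Wf a0 b0 p0 q0) \<longlongrightarrow> 0) F"
    unfolding Wf_def
    by (rule Lim_null_comparison[rotated]) (auto intro!: always_eventually W_lip_abs)
  then show ?thesis by (rule LIM_zero_cancel)
qed

lemma Wf_nonneg: "0 \<le> Wf a b p q" by (simp add: Wf_def leb_nonneg)

lemma Wf_le_len: "p \<le> q \<Longrightarrow> Wf a b p q \<le> q - p"
proof -
  assume "p \<le> q"
  have "Wf a b p q \<le> leb {p..q}" unfolding Wf_def
    by (rule leb_mono) (use per_mono[of "per {a..b} \<inter> per {p..q}" "per {p..q}"] in auto)
  then show ?thesis using leb_Icc_le[OF \<open>p \<le> q\<close>] by simp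
qed

lemma Wf_full: "Wf a b 0 1 = leb {a..b}"
  using per_UNIV[of 0] by (simp add: Wf_def)

lemma per_refl: "s \<in> per ((\<lambda>y. 1 - y) ` A) \<longleftrightarrow> 1 - s \<in> per A"
proof
  assume "s \<in> per ((\<lambda>y. 1 - y) ` A)"
  then obtain k :: int where "s + of_int k \<in> (\<lambda>y. 1 - y) ` A" by (auto simp: per_def)
  then obtain y where "y \<in> A" "s + of_int k = 1 - y" by auto
  then have "1 - s + of_int (-k) = y" by simp
  with \<open>y \<in> A\<close> have "1 - s + of_int (-k) \<in> A" by simp
  then show "1 - s \<in> per A" unfolding per_def by blast
next
  assume "1 - s \<in> per A"
  then obtain k :: int where "1 - s + of_int k \<in> A" by (auto simp: per_def)
  then have "s + of_int (-k) \<in> (\<lambda>y. 1 - y) ` A" by (auto intro!: image_eqI[of _ _ "1 - s + of_int k"])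
  then show "s \<in> per ((\<lambda>y. 1 - y) ` A)" unfolding per_def by blast
qed

lemma refl_Icc: "(\<lambda>y. 1 - y) ` {a..b} = {1-b..1-a::real}"
  by (auto intro!: image_eqI[of _ _ "1 - x" for x])

lemma refl_Ico: "(\<lambda>y. 1 - y) ` {a..<b} = {1-b<..1-a::real}"
  by (auto intro!: image_eqI[of _ _ "1 - x" for x])

lemma refl_pt: "(\<lambda>y. 1 - y) ` {a} = {1-a::real}"
  by auto

lemma shift_Icc: "(\<lambda>y. y + c) ` {a..b} = {a+c..b+c::real}"
  by (auto intro!: image_eqI[of _ _ "x - c" for x])

lemma shift_Ico: "(\<lambda>y. y + c) ` {a..<b} = {a+c..<b+c::real}"
  by (auto intro!: image_eqI[of _ _ "x - c" for x])

lemma shift_pt: "(\<lambda>y. y + c) ` {a} = {a+c::real}"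
  by auto


lemma refl_borel: "A \<in> sets borel \<Longrightarrow> (\<lambda>y::real. 1 - y) ` A \<in> sets borel"
proof -
  assume A: "A \<in> sets borel"
  have "(\<lambda>y::real. 1 - y) ` A = (\<lambda>y. 1 - y) -` A" by (auto intro!: image_eqI[of _ _ "1 - x" for x])
  moreover have "(\<lambda>y::real. 1 - y) -` A \<in> sets borel"
    by (rule measurable_sets_borel[OF _ A]) auto
  ultimately show ?thesis by simp
qed

lemma shift_borel: "A \<in> sets borel \<Longrightarrow> (\<lambda>y::real. y + c) ` A \<in> sets borel"
proof -
  assume A: "A \<in> sets borel"
  have "(\<lambda>y::real. y + c) ` A = (\<lambda>y. y - c) -` A" by (auto intro!: image_eqI[of _ _ "x - c" for x])
  moreover have "(\<lambda>y::real. y - c) -` A \<in> sets borel"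
    by (rule measurable_sets_borel[OF _ A]) auto
  ultimately show ?thesis by simp
qed

lemma leb_Int_le: "B \<in> sets borel \<Longrightarrow> leb (per A \<inter> per B) \<le> leb B"
  by (rule leb_mono) (use per_mono[of "per A \<inter> per B" "per B"] in auto)

lemma dirac_bnd: "0 \<le> dirac y A" "dirac y A \<le> 1" by (auto simp: dirac_def)

lemma dirac_Un: "dirac y (A \<union> B) \<le> dirac y A + dirac y B"
  by (auto simp: dirac_def per_Un)

lemma mu0_left_bnd:
  assumes "psi u \<noteq> phi u"
  shows "0 \<le> mu0_left psi phi u A" "mu0_left psi phi u A \<le> 1"
proof -
  let ?J = "{min (psi u) (phi u)..max (psi u) (phi u)}"
  have "leb (per A \<inter> per ?J) \<le> \<bar>phi u - psi u\<bar>"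
    using leb_Int_le[of ?J A] leb_Icc_le[of "min (psi u) (phi u)" "max (psi u) (phi u)"]
    by (auto simp: min_def max_def)
  then show "0 \<le> mu0_left psi phi u A" "mu0_left psi phi u A \<le> 1"
    using assms by (auto simp: mu0_left_def leb_nonneg)
qed

lemma mu0_left_Un:
  assumes "psi u \<noteq> phi u" "A \<in> sets borel" "B \<in> sets borel"
  shows "mu0_left psi phi u (A \<union> B) \<le> mu0_left psi phi u A + mu0_left psi phi u B"
proof -
  let ?J = "{min (psi u) (phi u)..max (psi u) (phi u)}"
  have "per (A \<union> B) \<inter> per ?J = (per A \<inter> per ?J) \<union> (per B \<inter> per ?J)" by (auto simp: per_Un)
  moreover have "leb ((per A \<inter> per ?J) \<union> (per B \<inter> per ?J)) \<le> leb (per A \<inter> per ?J) + leb (per B \<inter> per ?J)"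
    using assms by (intro leb_Un) (auto intro!: sets_per)
  ultimately show ?thesis using assms
    by (simp add: mu0_left_def add_divide_distrib[symmetric] divide_right_mono)
qed

lemma W_Ico:
  assumes "a \<le> b"
  shows "leb (per {a..<b} \<inter> per {p..q}) = Wf a b p q"
proof -
  have "leb (per {a..<b} \<inter> per {p..q}) \<le> Wf a b p q" unfolding Wf_def
    by (rule leb_mono2) (auto simp: per_def intro!: sets_per)
  moreover have "Wf a b p q \<le> leb (per {a..<b} \<inter> per {p..q}) + leb {b}"
  proof -
    have "per {a..b} \<inter> per {p..q} \<subseteq> (per {a..<b} \<inter> per {p..q}) \<union> per {b}"
      unfolding per_def by auto (metis order.order_iff_strict)
    then have "Wf a b p q \<le> leb ((per {a..<b} \<inter> per {p..q}) \<union> per {b})" unfolding Wf_def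
      by (rule leb_mono2) (auto intro!: sets_per sets.Un sets.Int)
    also have "\<dots> \<le> leb (per {a..<b} \<inter> per {p..q}) + leb (per {b})"
      by (rule leb_Un) (auto intro!: sets_per)
    finally show ?thesis by simp
  qed
  ultimately show ?thesis using leb_point[of b] by simp
qed

lemma W_Ioc:
  assumes "a \<le> b"
  shows "leb (per {a<..b} \<inter> per {p..q}) = Wf a b p q"
proof -
  have "leb (per {a<..b} \<inter> per {p..q}) \<le> Wf a b p q" unfolding Wf_def
    by (rule leb_mono2) (use per_mono[of "{a<..b}" "{a..b}", OF greaterThanAtMost_subseteq_atLeastAtMost_iff[THEN iffD2]] in \<open>auto intro!: sets_per\<close>)
  moreover have "Wf a b p q \<le> leb (per {a<..b} \<inter> per {p..q}) + leb {a}"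
  proof -
    have "per {a..b} \<inter> per {p..q} \<subseteq> (per {a<..b} \<inter> per {p..q}) \<union> per {a}"
      unfolding per_def by auto (metis order.order_iff_strict)
    then have "Wf a b p q \<le> leb ((per {a<..b} \<inter> per {p..q}) \<union> per {a})" unfolding Wf_def
      by (rule leb_mono2) (auto intro!: sets_per sets.Un sets.Int)
    also have "\<dots> \<le> leb (per {a<..b} \<inter> per {p..q}) + leb (per {a})"
      by (rule leb_Un) (auto intro!: sets_per)
    finally show ?thesis by simp
  qed
  ultimately show ?thesis using leb_point[of a] by simp
qed

lemma tendsto_regions:
  fixes f :: "nat \<Rightarrow> real"
  assumes "eventually (\<lambda>j. P1 j \<or> P2 j \<or> P3 j) F"
    and "\<And>e. e > 0 \<Longrightarrow> eventually (\<lambda>j. P1 j \<longrightarrow> \<bar>f j - L\<bar> < e) F"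
    and "\<And>e. e > 0 \<Longrightarrow> eventually (\<lambda>j. P2 j \<longrightarrow> \<bar>f j - L\<bar> < e) F"
    and "\<And>e. e > 0 \<Longrightarrow> eventually (\<lambda>j. P3 j \<longrightarrow> \<bar>f j - L\<bar> < e) F"
  shows "(f \<longlongrightarrow> L) F"
proof (rule tendstoI)
  fix e :: real assume "e > 0"
  from eventually_conj[OF assms(1) eventually_conj[OF assms(2)[OF \<open>e>0\<close>] eventually_conj[OF assms(3)[OF \<open>e>0\<close>] assms(4)[OF \<open>e>0\<close>]]]]
  show "eventually (\<lambda>j. dist (f j) L < e) F"
    by eventually_elim (auto simp: dist_real_def)
qed

lemma region_from_filter:
  fixes f :: "nat \<Rightarrow> real"
  assumes "(f \<longlongrightarrow> L) (inf F (principal {j. P j}))" "e > 0"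
  shows "eventually (\<lambda>j. P j \<longrightarrow> \<bar>f j - L\<bar> < e) F"
proof -
  have "eventually (\<lambda>j. dist (f j) L < e) (inf F (principal {j. P j}))"
    using tendstoD[OF assms] .
  then show ?thesis unfolding eventually_inf_principal by (simp add: dist_real_def)
qed

lemma frac_perturb:
  assumes "\<bar>d\<bar> < min (frac z) (1 - frac z)"
  shows "frac (z + d) = frac z + d"
proof -
  have "z + d = (frac z + d) + of_int \<lfloor>z\<rfloor>" by (simp add: frac_def)
  then have "frac (z + d) = frac (frac z + d)" by (simp only: frac_add_of_int_right)
  also have "\<dots> = frac z + d"
  proof -
    have "0 \<le> frac z + d" "frac z + d < 1" using assms by auto
    then show ?thesis using frac_eq by blast
  qed
  finally show ?thesis .
qed

lemma atom_frac:
  assumes tau: "frac (a - c0) \<noteq> 0" and c: "c \<longlonglongrightarrow> c0" and y: "y \<longlonglongrightarrow> y0"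
    and yr: "\<And>j. y j \<in> {0..1}" and e: "e \<longlonglongrightarrow> 0"
  shows "frac (a - c0) < y0 \<Longrightarrow> eventually (\<lambda>j. \<forall>s. \<bar>s - a\<bar> \<le> e j \<longrightarrow> s \<in> per {c j..c j + y j}) sequentially"
    and "frac (a - c0) > y0 \<Longrightarrow> eventually (\<lambda>j. \<forall>s. \<bar>s - a\<bar> \<le> e j \<longrightarrow> s \<notin> per {c j..c j + y j}) sequentially"
proof -
  define \<tau> where "\<tau> = frac (a - c0)"
  have t01: "0 < \<tau>" "\<tau> < 1" using tau frac_ge_0[of "a - c0"] frac_lt_1[of "a - c0"] by (auto simp: \<tau>_def)
  define d where "d = min \<tau> (1 - \<tau>)"
  have dpos: "d > 0" using t01 by (simp add: d_def)
  have key: "frac (s - c') = \<tau> + ((s - a) - (c' - c0))" if "\<bar>s - a\<bar> + \<bar>c' - c0\<bar> < d" for s c'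
  proof -
    have "s - c' = (a - c0) + ((s - a) - (c' - c0))" by simp
    moreover have "\<bar>(s - a) - (c' - c0)\<bar> < min (frac (a - c0)) (1 - frac (a - c0))"
      using that by (auto simp: d_def \<tau>_def)
    ultimately show ?thesis using frac_perturb[of "(s - a) - (c' - c0)" "a - c0"] by (simp add: \<tau>_def)
  qed
  have evs: "eventually (\<lambda>j. \<bar>c j - c0\<bar> < \<eta> \<and> \<bar>y j - y0\<bar> < \<eta> \<and> \<bar>e j\<bar> < \<eta>) sequentially" if "\<eta> > 0" for \<eta>
    using tendstoD[OF c that] tendstoD[OF y that] tendstoD[OF e that]
    by eventually_elim (auto simp: dist_real_def)
  show "eventually (\<lambda>j. \<forall>s. \<bar>s - a\<bar> \<le> e j \<longrightarrow> s \<in> per {c j..c j + y j}) sequentially"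
    if lt: "frac (a - c0) < y0"
  proof -
    define \<eta> where "\<eta> = min (d/2) ((y0 - \<tau>)/3)"
    have "\<eta> > 0" using dpos lt by (auto simp: \<eta>_def \<tau>_def)
    from evs[OF this] show ?thesis
    proof eventually_elim
      case (elim j)
      show ?case
      proof (intro allI impI)
        fix s assume s: "\<bar>s - a\<bar> \<le> e j"
        have "\<bar>s - a\<bar> + \<bar>c j - c0\<bar> < d" using s elim by (auto simp: \<eta>_def)
        then have "frac (s - c j) = \<tau> + ((s - a) - (c j - c0))" by (rule key)
        also have "\<dots> \<le> y j"
        proof -
          have "3 * \<eta> \<le> y0 - \<tau>" unfolding \<eta>_def by (simp add: min_def)
          then show ?thesis using s elim abs_ge_self[of "s - a"] abs_ge_minus_self[of "s - a"]
            abs_ge_self[of "c j - c0"] abs_ge_minus_self[of "c j - c0"]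
            abs_ge_self[of "y j - y0"] abs_ge_minus_self[of "y j - y0"] abs_ge_self[of "e j"] by (elim conjE) linarith
        qed
        finally show "s \<in> per {c j..c j + y j}" using per_Icc_iff yr[of j] by auto
      qed
    qed
  qed
  show "eventually (\<lambda>j. \<forall>s. \<bar>s - a\<bar> \<le> e j \<longrightarrow> s \<notin> per {c j..c j + y j}) sequentially"
    if gt: "frac (a - c0) > y0"
  proof -
    define \<eta> where "\<eta> = min (d/2) ((\<tau> - y0)/3)"
    have "\<eta> > 0" using dpos gt by (auto simp: \<eta>_def \<tau>_def)
    from evs[OF this] show ?thesis
    proof eventually_elim
      case (elim j)
      show ?case
      proof (intro allI impI)
        fix s assume s: "\<bar>s - a\<bar> \<le> e j"
        have "\<bar>s - a\<bar> + \<bar>c j - c0\<bar> < d" using s elim by (auto simp: \<eta>_def)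
        then have "frac (s - c j) = \<tau> + ((s - a) - (c j - c0))" by (rule key)
        also have "\<dots> > y j"
        proof -
          have "3 * \<eta> \<le> \<tau> - y0" unfolding \<eta>_def by (simp add: min_def)
          then show ?thesis using s elim abs_ge_self[of "s - a"] abs_ge_minus_self[of "s - a"]
            abs_ge_self[of "c j - c0"] abs_ge_minus_self[of "c j - c0"]
            abs_ge_self[of "y j - y0"] abs_ge_minus_self[of "y j - y0"] abs_ge_self[of "e j"] by (elim conjE) linarith
        qed
        finally show "s \<notin> per {c j..c j + y j}" using per_Icc_iff yr[of j] by auto
      qed
    qed
  qed
qed

lemma arc_in:
  assumes "{p..q} \<subseteq> per Y" "p \<le> q" "q - p \<le> 1"
  shows "leb (per Y \<inter> per {p..q}) = q - p"
proof -
  have "per {p..q} \<subseteq> per Y" using per_mono[OF assms(1)] by simp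
  then have "per Y \<inter> per {p..q} = per {p..q}" by auto
  then show ?thesis using leb_Icc[of "q - p" p] assms by simp
qed

lemma arc_out:
  assumes "{p..q} \<inter> per Y = {}"
  shows "leb (per Y \<inter> per {p..q}) = 0"
proof -
  have "per Y \<inter> per {p..q} = {}"
  proof (rule ccontr)
    assume "per Y \<inter> per {p..q} \<noteq> {}"
    then obtain t k where "t \<in> per Y" "t + of_int k \<in> {p..q}" by (auto simp: per_def)
    then have "t + of_int k \<in> per Y" using per_shift_int by blast
    then show False using assms \<open>t + of_int k \<in> {p..q}\<close> by auto
  qed
  moreover have "leb {} = 0" by (simp add: leb_def per_def)
  ultimately show ?thesis by simp
qed

lemma w_tail_sums: "(\<lambda>n. (1/2::real)^(n+N+1)) sums ((1/2)^N)"
proof -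
  have "(\<lambda>n. (1/2::real)^n) sums 2" using geometric_sums[of "1/2::real"] by simp
  then have "(\<lambda>n. (1/2::real)^(N+1) * (1/2)^n) sums ((1/2)^(N+1) * 2)" by (rule sums_mult)
  then show ?thesis by (simp add: power_add algebra_simps)
qed

lemma wsum:
  fixes g :: "nat \<Rightarrow> real"
  assumes g0: "\<And>n. 0 \<le> g n" and g1: "\<And>n. g n \<le> 1"
  shows "summable (\<lambda>n. (1/2)^(n+1) * g n)"
    and "(\<Sum>n. (1/2)^(n+1) * g n) \<le> (\<Sum>n<N. (1/2)^(n+1) * g n) + (1/2)^N"
    and "(\<Sum>n<N. (1/2)^(n+1) * g n) \<le> (\<Sum>n. (1/2)^(n+1) * g n)"
proof -
  have le: "norm ((1/2::real)^(n+1) * g n) \<le> (1/2)^(n+1)" for n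
    using g0[of n] g1[of n] by (simp add: mult_le_cancel_left1)
  have sw: "summable (\<lambda>n. (1/2::real)^(n+1))" using w_tail_sums[of 0] by (auto simp: sums_iff)
  show S: "summable (\<lambda>n. (1/2)^(n+1) * g n)"
    by (rule summable_comparison_test[OF _ sw]) (use le in auto)
  have "(\<Sum>n. (1/2)^(n+1) * g n) = (\<Sum>n. (1/2)^(n+N+1) * g (n+N)) + (\<Sum>n<N. (1/2)^(n+1) * g n)"
    using suminf_split_initial_segment[OF S, of N] by simp
  moreover have "(\<Sum>n. (1/2)^(n+N+1) * g (n+N)) \<le> (\<Sum>n. (1/2::real)^(n+N+1))"
  proof (rule suminf_le)
    show "(1/2)^(n+N+1) * g (n+N) \<le> (1/2::real)^(n+N+1)" for n
      using g0[of "n+N"] g1[of "n+N"] by (simp add: mult_le_cancel_left1)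
    show "summable (\<lambda>n. (1/2::real)^(n+N+1) * g (n+N))"
      using summable_ignore_initial_segment[OF S, of N] by (simp add: add.assoc)
    show "summable (\<lambda>n. (1/2::real)^(n+N+1))" using w_tail_sums[of N] by (auto simp: sums_iff)
  qed
  moreover have "(\<Sum>n. (1/2::real)^(n+N+1)) = (1/2)^N" using w_tail_sums[of N] by (simp add: sums_iff)
  ultimately show "(\<Sum>n. (1/2)^(n+1) * g n) \<le> (\<Sum>n<N. (1/2)^(n+1) * g n) + (1/2)^N" by simp
  show "(\<Sum>n<N. (1/2)^(n+1) * g n) \<le> (\<Sum>n. (1/2)^(n+1) * g n)"
    by (rule sum_le_suminf[OF S]) (use g0 in auto)
qed

lemma half_pow_small: "e > 0 \<Longrightarrow> \<exists>N. (1/2::real)^N < e"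
  by (rule real_arch_pow_inv) auto

lemma series_lower:
  fixes f :: "nat \<Rightarrow> nat \<Rightarrow> real" and a :: "nat \<Rightarrow> real"
  assumes f: "\<And>n j. 0 \<le> f n j \<and> f n j \<le> 1" and a: "\<And>n. 0 \<le> a n \<and> a n \<le> 1"
    and ev: "\<And>n e. e > 0 \<Longrightarrow> eventually (\<lambda>j. f n j > a n - e) sequentially" and e: "e > 0"
  shows "eventually (\<lambda>j. (\<Sum>n. (1/2)^(n+1) * f n j) > (\<Sum>n. (1/2)^(n+1) * a n) - e) sequentially"
proof -
  obtain N where N: "(1/2::real)^N < e/2" using half_pow_small[of "e/2"] e by auto
  have "eventually (\<lambda>j. \<forall>n\<in>{..<N}. f n j > a n - e/2) sequentially"
    using ev e by (intro eventually_ball_finite) auto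
  then show ?thesis
  proof eventually_elim
    case (elim j)
    have "(\<Sum>n<N. (1/2)^(n+1) * (a n - e/2)) \<le> (\<Sum>n<N. (1/2)^(n+1) * f n j)"
      using elim by (intro sum_mono mult_left_mono) (auto simp: less_imp_le)
    moreover have "(\<Sum>n<N. (1/2::real)^(n+1) * (a n - e/2)) = (\<Sum>n<N. (1/2)^(n+1) * a n) - e/2 * (\<Sum>n<N. (1/2::real)^(n+1))"
    proof -
      have "(\<Sum>n<N. (1/2::real)^(n+1) * (a n - e/2)) = (\<Sum>n<N. (1/2)^(n+1) * a n - e/2 * (1/2::real)^(n+1))"
        by (intro sum.cong refl) (metis mult.commute right_diff_distrib)
      also have "\<dots> = (\<Sum>n<N. (1/2)^(n+1) * a n) - e/2 * (\<Sum>n<N. (1/2::real)^(n+1))"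
        by (simp add: sum_subtractf sum_distrib_left)
      finally show ?thesis .
    qed
    moreover have "(\<Sum>n<N. (1/2::real)^(n+1)) \<le> 1"
      using wsum(3)[of "\<lambda>_. 1" N] w_tail_sums[of 0] by (simp add: sums_iff)
    moreover have "(\<Sum>n. (1/2)^(n+1) * a n) \<le> (\<Sum>n<N. (1/2)^(n+1) * a n) + (1/2)^N"
      using wsum(2)[of a N] a by auto
    moreover have "(\<Sum>n<N. (1/2)^(n+1) * f n j) \<le> (\<Sum>n. (1/2)^(n+1) * f n j)"
      using wsum(3)[of "\<lambda>n. f n j" N] f by auto
    moreover have "e/2 * (\<Sum>n<N. (1/2::real)^(n+1)) \<le> e/2"
      using calculation(3) e by (simp add: mult_left_le)
    ultimately show ?case using N e by linarith
  qed
qed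

lemma series_upper:
  fixes f :: "nat \<Rightarrow> nat \<Rightarrow> real" and b :: "nat \<Rightarrow> real"
  assumes f: "\<And>n j. 0 \<le> f n j \<and> f n j \<le> 1" and b: "\<And>n. 0 \<le> b n \<and> b n \<le> 1"
    and ev: "\<And>n e. e > 0 \<Longrightarrow> eventually (\<lambda>j. f n j < b n + e) sequentially" and e: "e > 0"
  shows "eventually (\<lambda>j. (\<Sum>n. (1/2)^(n+1) * f n j) < (\<Sum>n. (1/2)^(n+1) * b n) + e) sequentially"
proof -
  obtain N where N: "(1/2::real)^N < e/2" using half_pow_small[of "e/2"] e by auto
  have "eventually (\<lambda>j. \<forall>n\<in>{..<N}. f n j < b n + e/2) sequentially"
    using ev e by (intro eventually_ball_finite) auto
  then show ?thesis
  proof eventually_elim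
    case (elim j)
    have "(\<Sum>n<N. (1/2)^(n+1) * f n j) \<le> (\<Sum>n<N. (1/2)^(n+1) * (b n + e/2))"
      using elim by (intro sum_mono mult_left_mono) (auto simp: less_imp_le)
    moreover have "(\<Sum>n<N. (1/2::real)^(n+1) * (b n + e/2)) = (\<Sum>n<N. (1/2)^(n+1) * b n) + e/2 * (\<Sum>n<N. (1/2::real)^(n+1))"
    proof -
      have "(\<Sum>n<N. (1/2::real)^(n+1) * (b n + e/2)) = (\<Sum>n<N. (1/2)^(n+1) * b n + e/2 * (1/2::real)^(n+1))"
        by (intro sum.cong refl) (metis mult.commute distrib_left)
      also have "\<dots> = (\<Sum>n<N. (1/2)^(n+1) * b n) + e/2 * (\<Sum>n<N. (1/2::real)^(n+1))"
        by (simp add: sum.distrib sum_distrib_left)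
      finally show ?thesis .
    qed
    moreover have "(\<Sum>n<N. (1/2::real)^(n+1)) \<le> 1"
      using wsum(3)[of "\<lambda>_. 1" N] w_tail_sums[of 0] by (simp add: sums_iff)
    moreover have "(\<Sum>n. (1/2)^(n+1) * f n j) \<le> (\<Sum>n<N. (1/2)^(n+1) * f n j) + (1/2)^N"
      using wsum(2)[of "\<lambda>n. f n j" N] f by auto
    moreover have "(\<Sum>n<N. (1/2)^(n+1) * b n) \<le> (\<Sum>n. (1/2)^(n+1) * b n)"
      using wsum(3)[of b N] b by auto
    moreover have "e/2 * (\<Sum>n<N. (1/2::real)^(n+1)) \<le> e/2"
      using calculation(3) e by (simp add: mult_left_le)
    ultimately show ?case using N e by linarith
  qed
qed

lemma ereal_liminf_ge:
  assumes "\<And>e. e > 0 \<Longrightarrow> eventually (\<lambda>j. f j > L - e) sequentially"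
  shows "ereal L \<le> liminf (\<lambda>j. ereal (f j))"
  unfolding le_Liminf_iff
proof (intro allI impI)
  fix y :: ereal assume y: "y < ereal L"
  show "eventually (\<lambda>j. y < ereal (f j)) sequentially"
  proof (cases y)
    case (real t)
    then have "t < L" using y by simp
    from assms[of "L - t"] this show ?thesis by (auto simp: real elim: eventually_mono)
  next
    case MInf then show ?thesis by simp
  next
    case PInf then show ?thesis using y by simp
  qed
qed

lemma ereal_limsup_le:
  assumes "\<And>e. e > 0 \<Longrightarrow> eventually (\<lambda>j. f j < L + e) sequentially"
  shows "limsup (\<lambda>j. ereal (f j)) \<le> ereal L"
  unfolding Limsup_le_iff
proof (intro allI impI)
  fix y :: ereal assume y: "y > ereal L"
  show "eventually (\<lambda>j. ereal (f j) < y) sequentially"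
  proof (cases y)
    case (real t)
    then have "t > L" using y by simp
    from assms[of "t - L"] this show ?thesis by (auto simp: real elim: eventually_mono)
  next
    case PInf then show ?thesis by simp
  next
    case MInf then show ?thesis using y by simp
  qed
qed

lemma lin1: "(S'::real) - e < S \<Longrightarrow> \<bar>yj - y0\<bar> < e \<Longrightarrow> (y0 + S')/2 - e < (yj + S)/2"
  by (simp add: abs_less_iff field_simps)
lemma lin2: "(S::real) < S' + e \<Longrightarrow> \<bar>yj - y0\<bar> < e \<Longrightarrow> (yj + S)/2 < (y0 + S')/2 + e"
  by (simp add: abs_less_iff field_simps)
lemma lin3: "(a::real) \<le> c + e \<Longrightarrow> b \<le> d + f \<Longrightarrow> (a+b)/2 \<le> (c+d)/2 + (e+f)/2"
  by (simp add: field_simps)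

locale SP =
  fixes \<alpha> :: real and r :: "real \<Rightarrow> real"
    and x1s y1s xb1 xb2 :: real and psi phi :: "real \<Rightarrow> real"
  assumes r_cont: "continuous_on UNIV r"
    and r_per: "\<And>x. r (x + 1) = r x"
    and orbit: "\<And>m::int. \<And>z. z \<in> {(x1s, y1s), (x1s + 1/2, 1 - y1s)} \<Longrightarrow>
                  frac (snd (Spow \<alpha> r m z)) \<noteq> 0"
    and xb: "xb1 < x1s" "x1s < xb2" "0 < xb1" "xb2 < 1/2"
    and psi_cont: "continuous_on {xb1..xb2} psi"
    and phi_cont: "continuous_on {xb1..xb2} phi"
    and psi_range: "\<And>x. x \<in> {xb1..xb2} \<Longrightarrow> psi x \<in> {0..1}"
    and phi_range: "\<And>x. x \<in> {xb1..xb2} \<Longrightarrow> phi x \<in> {0..1}"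
    and bd: "psi xb1 = 0" "phi xb1 = 1" "psi xb2 = 1" "phi xb2 = 0"
    and lt: "\<And>x. x \<in> {xb1..<x1s} \<Longrightarrow> psi x < phi x"
    and gt: "\<And>x. x \<in> {x1s<..xb2} \<Longrightarrow> psi x > phi x"
    and eq: "psi x1s = phi x1s" "frac (psi x1s) = frac y1s"
begin

abbreviation "M0 \<equiv> mu0 xb1 xb2 x1s y1s psi phi"

lemma psi_ne_phi: "u \<in> {xb1..xb2} \<Longrightarrow> u \<noteq> x1s \<Longrightarrow> psi u \<noteq> phi u"
  using lt[of u] gt[of u] by (cases "u < x1s") auto

lemma len_le1: "u \<in> {xb1..xb2} \<Longrightarrow> \<bar>phi u - psi u\<bar> \<le> 1"
  using psi_range[of u] phi_range[of u] by auto

lemma M0_bnd: "0 \<le> M0 x A" "M0 x A \<le> 1"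
proof -
  have L: "\<And>u A. xb1 < u \<Longrightarrow> u < xb2 \<Longrightarrow> u \<noteq> x1s \<Longrightarrow>
     0 \<le> mu0_left psi phi u A \<and> mu0_left psi phi u A \<le> 1"
    using mu0_left_bnd psi_ne_phi by auto
  have "0 \<le> M0 x A \<and> M0 x A \<le> 1"
    unfolding mu0_def Let_def
    using dirac_bnd leb_nonneg leb_le1 L
    by auto
  then show "0 \<le> M0 x A" "M0 x A \<le> 1" by auto
qed

lemma M0_per: "M0 (x + of_int k) A = M0 x A"
  unfolding mu0_def by (simp only: frac_add_of_int_right)

lemma M0_Un:
  assumes "A \<in> sets borel" "B \<in> sets borel"
  shows "M0 x (A \<union> B) \<le> M0 x A + M0 x B"
proof -
  have rB: "(\<lambda>y::real. 1 - y) ` A \<in> sets borel" "(\<lambda>y::real. 1 - y) ` B \<in> sets borel"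
    using assms by (auto intro: refl_borel)
  show ?thesis
    unfolding mu0_def Let_def image_Un
    using dirac_Un leb_Un[OF assms] mu0_left_Un[OF _ assms]
      mu0_left_Un[OF _ rB] psi_ne_phi
    by auto
qed


definition "inL u \<longleftrightarrow> xb1 < u \<and> u < xb2 \<and> u \<noteq> x1s"
definition "inR u \<longleftrightarrow> xb1 + 1/2 < u \<and> u < xb2 + 1/2 \<and> u \<noteq> x1s + 1/2"
definition "inLeb u \<longleftrightarrow> u \<noteq> x1s \<and> u \<noteq> x1s + 1/2 \<and> \<not> (xb1 < u \<and> u < xb2)
   \<and> \<not> (xb1 + 1/2 < u \<and> u < xb2 + 1/2)"



lemma V_L: "inL (frac x) \<Longrightarrow> M0 x {a..b} =
   Wf a b (min (psi (frac x)) (phi (frac x))) (max (psi (frac x)) (phi (frac x))) / \<bar>phi (frac x) - psi (frac x)\<bar>"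
  unfolding mu0_def Let_def inL_def mu0_left_def Wf_def using xb by auto

lemma V_R: "inR (frac x) \<Longrightarrow> M0 x {a..b} =
   Wf (1-b) (1-a) (min (psi (frac x - 1/2)) (phi (frac x - 1/2))) (max (psi (frac x - 1/2)) (phi (frac x - 1/2)))
     / \<bar>phi (frac x - 1/2) - psi (frac x - 1/2)\<bar>"
  unfolding mu0_def Let_def inR_def mu0_left_def Wf_def refl_Icc using xb by auto

lemma V_L': "inL (frac x) \<Longrightarrow> M0 x A = mu0_left psi phi (frac x) A"
  unfolding mu0_def Let_def inL_def using xb by auto

lemma V_R': "inR (frac x) \<Longrightarrow> M0 x A = mu0_left psi phi (frac x - 1/2) ((\<lambda>y. 1 - y) ` A)"
  unfolding mu0_def Let_def inR_def using xb by auto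

lemma V_Leb: "inLeb (frac x) \<Longrightarrow> M0 x A = leb A"
  unfolding mu0_def Let_def inLeb_def by auto

lemma V_A1: "frac x = x1s \<Longrightarrow> M0 x A = dirac y1s A"
  unfolding mu0_def Let_def by auto

lemma V_A2: "frac x = x1s + 1/2 \<Longrightarrow> M0 x A = dirac (1 - y1s) A"
  unfolding mu0_def Let_def using xb by auto


lemma frac_small: "0 \<le> u \<Longrightarrow> u < 1 \<Longrightarrow> frac u = u"
  by (simp add: frac_eq)

lemma region1:
  assumes u: "u \<longlonglongrightarrow> u0" and c: "c \<longlonglongrightarrow> c0" and y: "y \<longlonglongrightarrow> y0"
    and u0: "u0 \<in> {xb1..xb2}" "u0 \<noteq> x1s" and e: "e > 0"
  shows "eventually (\<lambda>j. (inL (u j) \<and> frac (u j) = u j) \<longrightarrow>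
      \<bar>M0 (u j) {c j..c j + y j} - M0 u0 {c0..c0+y0}\<bar> < e) sequentially"
proof -
  let ?F = "inf sequentially (principal {j. inL (u j) \<and> frac (u j) = u j})"
  let ?V = "Wf c0 (c0+y0) (min (psi u0) (phi u0)) (max (psi u0) (phi u0)) / \<bar>phi u0 - psi u0\<bar>"
  have fu0: "frac u0 = u0" using u0 xb by (intro frac_small) auto
  have uF: "(u \<longlongrightarrow> u0) ?F" using u by (rule tendsto_mono[OF inf_le1])
  have cF: "(c \<longlongrightarrow> c0) ?F" using c by (rule tendsto_mono[OF inf_le1])
  have yF: "(y \<longlongrightarrow> y0) ?F" using y by (rule tendsto_mono[OF inf_le1])
  have inF: "eventually (\<lambda>j. inL (u j) \<and> frac (u j) = u j) ?F"
    by (simp add: eventually_inf_principal)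
  have inS: "eventually (\<lambda>j. u j \<in> {xb1..xb2}) ?F"
    using inF by eventually_elim (auto simp: inL_def)
  have psiF: "((\<lambda>j. psi (u j)) \<longlongrightarrow> psi u0) ?F"
    by (rule continuous_on_tendsto_compose[OF psi_cont uF u0(1) inS])
  have phiF: "((\<lambda>j. phi (u j)) \<longlongrightarrow> phi u0) ?F"
    by (rule continuous_on_tendsto_compose[OF phi_cont uF u0(1) inS])
  have ne: "\<bar>phi u0 - psi u0\<bar> \<noteq> 0" using psi_ne_phi[OF u0] by simp
  have lim: "((\<lambda>j. Wf (c j) (c j + y j) (min (psi (u j)) (phi (u j))) (max (psi (u j)) (phi (u j)))
      / \<bar>phi (u j) - psi (u j)\<bar>) \<longlongrightarrow> ?V) ?F"
    by (intro tendsto_divide Wf_tendsto tendsto_add tendsto_min tendsto_max tendsto_rabs tendsto_diff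
        cF yF psiF phiF ne)
  have lim2: "((\<lambda>j. M0 (u j) {c j..c j + y j}) \<longlongrightarrow> ?V) ?F"
    by (rule Lim_transform_eventually[OF lim]) (use inF in \<open>eventually_elim, simp add: V_L\<close>)
  have VL: "?V = M0 u0 {c0..c0+y0}"
  proof (cases "inL u0")
    case True then show ?thesis using V_L[of u0] fu0 by simp
  next
    case False
    then have "u0 = xb1 \<or> u0 = xb2" using u0 by (auto simp: inL_def)
    moreover have "inLeb u0" using calculation xb by (auto simp: inLeb_def)
    ultimately show ?thesis using V_Leb[of u0] fu0 bd by (auto simp: Wf_full)
  qed
  show ?thesis
    using region_from_filter[OF lim2[unfolded VL] e] .
qed

lemma region2:
  assumes u: "u \<longlonglongrightarrow> u0" and c: "c \<longlonglongrightarrow> c0" and y: "y \<longlonglongrightarrow> y0"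
    and y0: "y0 \<in> {0..1}"
    and u0: "u0 - 1/2 \<in> {xb1..xb2}" "u0 \<noteq> x1s + 1/2" and e: "e > 0"
  shows "eventually (\<lambda>j. (inR (u j) \<and> frac (u j) = u j) \<longrightarrow>
      \<bar>M0 (u j) {c j..c j + y j} - M0 u0 {c0..c0+y0}\<bar> < e) sequentially"
proof -
  let ?F = "inf sequentially (principal {j. inR (u j) \<and> frac (u j) = u j})"
  let ?w = "u0 - 1/2"
  let ?V = "Wf (1 - (c0+y0)) (1 - c0) (min (psi ?w) (phi ?w)) (max (psi ?w) (phi ?w)) / \<bar>phi ?w - psi ?w\<bar>"
  have fu0: "frac u0 = u0" using u0 xb by (intro frac_small) auto
  have uF: "((\<lambda>j. u j - 1/2) \<longlongrightarrow> ?w) ?F" using u by (intro tendsto_diff tendsto_const tendsto_mono[OF inf_le1])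
  have cF: "(c \<longlongrightarrow> c0) ?F" using c by (rule tendsto_mono[OF inf_le1])
  have yF: "(y \<longlongrightarrow> y0) ?F" using y by (rule tendsto_mono[OF inf_le1])
  have inF: "eventually (\<lambda>j. inR (u j) \<and> frac (u j) = u j) ?F"
    by (simp add: eventually_inf_principal)
  have inS: "eventually (\<lambda>j. u j - 1/2 \<in> {xb1..xb2}) ?F"
    using inF by eventually_elim (auto simp: inR_def)
  have psiF: "((\<lambda>j. psi (u j - 1/2)) \<longlongrightarrow> psi ?w) ?F"
    by (rule continuous_on_tendsto_compose[OF psi_cont uF u0(1) inS])
  have phiF: "((\<lambda>j. phi (u j - 1/2)) \<longlongrightarrow> phi ?w) ?F"
    by (rule continuous_on_tendsto_compose[OF phi_cont uF u0(1) inS])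
  have ne: "\<bar>phi ?w - psi ?w\<bar> \<noteq> 0" using psi_ne_phi[OF u0(1)] u0(2) by auto
  have lim: "((\<lambda>j. Wf (1 - (c j + y j)) (1 - c j) (min (psi (u j - 1/2)) (phi (u j - 1/2)))
      (max (psi (u j - 1/2)) (phi (u j - 1/2)))
      / \<bar>phi (u j - 1/2) - psi (u j - 1/2)\<bar>) \<longlongrightarrow> ?V) ?F"
    by (intro tendsto_divide Wf_tendsto tendsto_add tendsto_min tendsto_max tendsto_rabs tendsto_diff
        tendsto_const cF yF psiF phiF ne)
  have lim2: "((\<lambda>j. M0 (u j) {c j..c j + y j}) \<longlongrightarrow> ?V) ?F"
    by (rule Lim_transform_eventually[OF lim]) (use inF in \<open>eventually_elim, simp add: V_R\<close>)
  have VL: "?V = M0 u0 {c0..c0+y0}"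
  proof (cases "inR u0")
    case True then show ?thesis using V_R[of u0] fu0 by simp
  next
    case False
    then have "?w = xb1 \<or> ?w = xb2" using u0 by (auto simp: inR_def)
    moreover have "inLeb u0" using calculation xb by (auto simp: inLeb_def)
    moreover have "leb {1 - (c0 + y0)..1 - c0} = y0"
      using leb_Icc[of y0 "1 - (c0 + y0)"] y0 by simp
    ultimately show ?thesis using V_Leb[of u0] fu0 bd leb_Icc[of y0 c0] y0 by (auto simp: Wf_full)
  qed
  show ?thesis
    using region_from_filter[OF lim2[unfolded VL] e] .
qed


lemma ev_open: "u \<longlonglongrightarrow> u0 \<Longrightarrow> open S \<Longrightarrow> u0 \<in> S \<Longrightarrow> eventually (\<lambda>j. u j \<in> S) sequentially"
  by (rule topological_tendstoD)

lemma nonatomic: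
  assumes u: "u \<longlonglongrightarrow> u0" and c: "c \<longlonglongrightarrow> c0" and y: "y \<longlonglongrightarrow> y0"
    and yr: "\<And>j. y j \<in> {0..1}" and y0: "y0 \<in> {0..1}"
    and u0: "0 \<le> u0" "u0 < 1" "u0 \<noteq> x1s" "u0 \<noteq> x1s + 1/2"
  shows "(\<lambda>j. M0 (u j) {c j..c j + y j}) \<longlonglongrightarrow> M0 u0 {c0..c0+y0}"
proof -
  have fu0: "frac u0 = u0" using u0 by (intro frac_small) auto
  have y0v: "leb {c0..c0+y0} = y0" using y0 leb_Icc by auto
  have yv: "leb {c j..c j + y j} = y j" for j using yr[of j] leb_Icc by auto
  show ?thesis
  proof (cases "u0 = 0")
    case True
    define \<eta> where "\<eta> = min xb1 (1/2 - xb2)"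
    have eta: "\<eta> > 0" using xb by (auto simp: \<eta>_def)
    have "inLeb u0" using True xb by (auto simp: inLeb_def)
    then have L: "M0 u0 {c0..c0+y0} = y0" using V_Leb[of u0] fu0 y0v by simp
    have ev: "eventually (\<lambda>j. u j \<in> {-\<eta><..<\<eta>}) sequentially"
      using True eta by (intro ev_open[OF u]) auto
    have "eventually (\<lambda>j. y j = M0 (u j) {c j..c j + y j}) sequentially"
      using ev
    proof eventually_elim
      case (elim j)
      have "inLeb (frac (u j))"
      proof (cases "0 \<le> u j")
        case True
        then have "frac (u j) = u j" using elim xb by (intro frac_small) (auto simp: \<eta>_def)
        then show ?thesis using elim True xb by (auto simp: inLeb_def \<eta>_def)
      next
        case False
        then have "frac (u j) = u j + 1" using elim xb by (intro frac_neg1) (auto simp: \<eta>_def)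
        then show ?thesis using elim False xb by (auto simp: inLeb_def \<eta>_def)
      qed
      then show ?case using V_Leb yv by simp
    qed
    then show ?thesis using y L by (auto intro: Lim_transform_eventually)
  next
    case False
    then have u0p: "0 < u0" using u0 by simp
    let ?P1 = "\<lambda>j. inL (u j) \<and> frac (u j) = u j"
    let ?P2 = "\<lambda>j. inR (u j) \<and> frac (u j) = u j"
    let ?P3 = "\<lambda>j. inLeb (u j) \<and> frac (u j) = u j"
    have ev: "eventually (\<lambda>j. u j \<in> {0<..<1} - {x1s} - {x1s + 1/2}) sequentially"
      using u0p u0 by (intro ev_open[OF u] open_Diff open_greaterThanLessThan closed_singleton) auto
    have cover: "eventually (\<lambda>j. ?P1 j \<or> ?P2 j \<or> ?P3 j) sequentially"
      using ev
    proof eventually_elim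
      case (elim j)
      then have "frac (u j) = u j" by (intro frac_small) auto
      then show ?case using elim by (auto simp: inL_def inR_def inLeb_def)
    qed
    show ?thesis
    proof (rule tendsto_regions[OF cover])
      fix e :: real assume e: "e > 0"
      show "eventually (\<lambda>j. ?P1 j \<longrightarrow> \<bar>M0 (u j) {c j..c j + y j} - M0 u0 {c0..c0+y0}\<bar> < e) sequentially"
      proof (cases "u0 \<in> {xb1..xb2}")
        case True then show ?thesis using region1[OF u c y True u0(3) e] by simp
      next
        case False
        have "eventually (\<lambda>j. u j \<in> - {xb1..xb2}) sequentially"
          using False by (intro ev_open[OF u]) auto
        then show ?thesis by eventually_elim (auto simp: inL_def)
      qed
      show "eventually (\<lambda>j. ?P2 j \<longrightarrow> \<bar>M0 (u j) {c j..c j + y j} - M0 u0 {c0..c0+y0}\<bar> < e) sequentially"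
      proof (cases "u0 - 1/2 \<in> {xb1..xb2}")
        case True then show ?thesis using region2[OF u c y y0 True u0(4) e] by simp
      next
        case False
        have "eventually (\<lambda>j. u j \<in> - {xb1 + 1/2..xb2 + 1/2}) sequentially"
          using False by (intro ev_open[OF u]) auto
        then show ?thesis by eventually_elim (auto simp: inR_def)
      qed
      show "eventually (\<lambda>j. ?P3 j \<longrightarrow> \<bar>M0 (u j) {c j..c j + y j} - M0 u0 {c0..c0+y0}\<bar> < e) sequentially"
      proof (cases "inLeb u0")
        case True
        then have L: "M0 u0 {c0..c0+y0} = y0" using V_Leb[of u0] fu0 y0v by simp
        have "eventually (\<lambda>j. dist (y j) y0 < e) sequentially" using tendstoD[OF y e] .
        then show ?thesis by eventually_elim (auto simp: L V_Leb yv dist_real_def)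
      next
        case False
        then have "u0 \<in> {xb1<..<xb2} \<or> u0 \<in> {xb1 + 1/2<..<xb2 + 1/2}" using u0 by (auto simp: inLeb_def)
        then show ?thesis
        proof
          assume "u0 \<in> {xb1<..<xb2}"
          then have "eventually (\<lambda>j. u j \<in> {xb1<..<xb2}) sequentially" by (intro ev_open[OF u]) auto
          then show ?thesis by eventually_elim (auto simp: inLeb_def)
        next
          assume "u0 \<in> {xb1 + 1/2<..<xb2 + 1/2}"
          then have "eventually (\<lambda>j. u j \<in> {xb1 + 1/2<..<xb2 + 1/2}) sequentially" by (intro ev_open[OF u]) auto
          then show ?thesis by eventually_elim (auto simp: inLeb_def)
        qed
      qed
    qed
  qed
qed

lemma nonatomic_Ico:
  assumes y0: "y0 \<in> {0..1}"
    and u0: "0 \<le> u0" "u0 < 1" "u0 \<noteq> x1s" "u0 \<noteq> x1s + 1/2"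
  shows "M0 u0 {c0..<c0+y0} = M0 u0 {c0..c0+y0}"
proof -
  have fu0: "frac u0 = u0" using u0 by (intro frac_small) auto
  consider "inL u0" | "inR u0" | "inLeb u0" using u0 by (auto simp: inL_def inR_def inLeb_def)
  then show ?thesis
  proof cases
    case 1 then show ?thesis using V_L'[of u0] fu0 y0
      by (simp add: mu0_left_def W_Ico Wf_def)
  next
    case 2 then show ?thesis using V_R'[of u0] fu0 y0
      by (simp add: mu0_left_def refl_Ico refl_Icc W_Ioc Wf_def)
  next
    case 3 then show ?thesis using V_Leb[of u0] fu0 y0 leb_Icc leb_Ico by auto
  qed
qed


lemma minmax_close: "s \<in> {min p q..max p q} \<Longrightarrow> \<bar>s - a\<bar> \<le> max \<bar>p - a\<bar> \<bar>q - (a::real)\<bar>"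
  by (auto simp: min_def max_def split: if_splits)

lemma ml_in:
  assumes "w \<in> {xb1..xb2}" "w \<noteq> x1s" "{min (psi w) (phi w)..max (psi w) (phi w)} \<subseteq> per A"
  shows "mu0_left psi phi w A = 1"
proof -
  have "leb (per A \<inter> per {min (psi w) (phi w)..max (psi w) (phi w)}) = max (psi w) (phi w) - min (psi w) (phi w)"
    using len_le1[OF assms(1)] by (intro arc_in assms(3)) (auto simp: min_def max_def)
  moreover have "max (psi w) (phi w) - min (psi w) (phi w) = \<bar>phi w - psi w\<bar>" by (auto simp: min_def max_def)
  ultimately show ?thesis using psi_ne_phi[OF assms(1,2)] by (simp add: mu0_left_def)
qed

lemma ml_out:
  assumes "{min (psi w) (phi w)..max (psi w) (phi w)} \<inter> per A = {}"
  shows "mu0_left psi phi w A = 0"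
  using arc_out[OF assms] by (simp add: mu0_left_def)

lemma psi_int: "\<exists>k::int. psi x1s = y1s + of_int k"
  using eq(2) by (intro exI[of _ "\<lfloor>psi x1s\<rfloor> - \<lfloor>y1s\<rfloor>"]) (simp add: frac_def)

lemma e_tendsto:
  assumes u: "w \<longlonglongrightarrow> x1s"
  shows "(\<lambda>j. if w j \<in> {xb1..xb2} then max \<bar>psi (w j) - psi x1s\<bar> \<bar>phi (w j) - psi x1s\<bar> else 0) \<longlonglongrightarrow> 0"
proof -
  have inS: "eventually (\<lambda>j. w j \<in> {xb1<..<xb2}) sequentially"
    using xb by (intro ev_open[OF u]) auto
  have x1: "x1s \<in> {xb1..xb2}" using xb by auto
  have inS': "eventually (\<lambda>j. w j \<in> {xb1..xb2}) sequentially" using inS by eventually_elim auto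
  have p: "(\<lambda>j. psi (w j)) \<longlonglongrightarrow> psi x1s"
    by (rule continuous_on_tendsto_compose[OF psi_cont u x1 inS'])
  have q: "(\<lambda>j. phi (w j)) \<longlonglongrightarrow> psi x1s"
    using continuous_on_tendsto_compose[OF phi_cont u x1 inS'] eq(1) by simp
  have "(\<lambda>j. max \<bar>psi (w j) - psi x1s\<bar> \<bar>phi (w j) - psi x1s\<bar>) \<longlonglongrightarrow> max 0 0"
    using LIM_zero[OF p] LIM_zero[OF q] by (intro tendsto_max tendsto_rabs_zero)
  then have "(\<lambda>j. max \<bar>psi (w j) - psi x1s\<bar> \<bar>phi (w j) - psi x1s\<bar>) \<longlonglongrightarrow> 0" by simp
  then show ?thesis
    by (rule Lim_transform_eventually) (use inS' in \<open>eventually_elim, auto\<close>)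
qed

lemma atomic1:
  assumes u: "u \<longlonglongrightarrow> x1s" and c: "c \<longlonglongrightarrow> c0" and y: "y \<longlonglongrightarrow> y0"
    and yr: "\<And>j. y j \<in> {0..1}" and y0: "y0 \<in> {0..1}"
    and atom: "frac (y1s - c0) \<noteq> 0" and e: "e > 0"
  shows "eventually (\<lambda>j. M0 (u j) {c j..c j + y j} > M0 x1s {c0..<c0+y0} - e) sequentially"
    and "eventually (\<lambda>j. M0 (u j) {c j..c j + y j} < M0 x1s {c0..c0+y0} + e) sequentially"
proof -
  define a where "a = psi x1s"
  obtain k :: int where k: "a = y1s + of_int k" using psi_int unfolding a_def by blast
  have fa: "frac (a - c0) = frac (y1s - c0)"
    using k frac_add_of_int_right[of "y1s - c0" k] by (simp add: algebra_simps)
  have mem: "y1s \<in> per A \<longleftrightarrow> a \<in> per A" for A using per_shift_int[of y1s k A] k by simp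
  have fx: "frac x1s = x1s" using xb by (intro frac_small) auto
  have M0x: "M0 x1s A = dirac y1s A" for A using V_A1[of x1s] fx by simp
  define e' where "e' j = (if u j \<in> {xb1..xb2} then max \<bar>psi (u j) - a\<bar> \<bar>phi (u j) - a\<bar> else 0)" for j
  have e'0: "e' \<longlonglongrightarrow> 0" unfolding e'_def a_def by (rule e_tendsto[OF u])
  have ev1: "eventually (\<lambda>j. u j \<in> {xb1<..<xb2}) sequentially"
    using xb by (intro ev_open[OF u]) auto
  have atom': "frac (a - c0) \<noteq> 0" using atom fa by simp
  have Jsub: "s \<in> {min (psi (u j)) (phi (u j))..max (psi (u j)) (phi (u j))} \<Longrightarrow> u j \<in> {xb1<..<xb2}
     \<Longrightarrow> \<bar>s - a\<bar> \<le> e' j" for s j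
    using minmax_close[of s "psi (u j)" "phi (u j)" a] by (auto simp: e'_def)
  have e'pos: "u j \<in> {xb1<..<xb2} \<Longrightarrow> 0 \<le> e' j" for j by (auto simp: e'_def)
  have br: "u j \<in> {xb1<..<xb2} \<Longrightarrow> (u j = x1s \<and> M0 (u j) A = dirac y1s A) \<or>
      (u j \<in> {xb1..xb2} \<and> u j \<noteq> x1s \<and> M0 (u j) A = mu0_left psi phi (u j) A)" for j A
  proof -
    assume h: "u j \<in> {xb1<..<xb2}"
    then have f: "frac (u j) = u j" using xb by (intro frac_small) auto
    show ?thesis
    proof (cases "u j = x1s")
      case True then show ?thesis using M0x by simp
    next
      case False then show ?thesis using V_L'[of "u j" A] f h by (auto simp: inL_def)
    qed
  qed
  show "eventually (\<lambda>j. M0 (u j) {c j..c j + y j} > M0 x1s {c0..<c0+y0} - e) sequentially"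
  proof (cases "y1s \<in> per {c0..<c0+y0}")
    case True
    then have "frac (a - c0) < y0" using per_Ico_iff[of y0 y1s c0] y0 fa by auto
    from atom_frac(1)[OF atom' c y yr e'0 this] ev1
    show ?thesis
    proof eventually_elim
      case (elim j)
      have "M0 (u j) {c j..c j + y j} = 1"
        using br[OF elim(2), of "{c j..c j + y j}"]
      proof
        assume "u j = x1s \<and> M0 (u j) {c j..c j + y j} = dirac y1s {c j..c j + y j}"
        then have h: "M0 (u j) {c j..c j + y j} = dirac y1s {c j..c j + y j}" by blast
        have "a \<in> per {c j..c j + y j}" using elim e'pos by auto
        then have "dirac y1s {c j..c j + y j} = 1" using mem[of "{c j..c j + y j}"] by (simp add: dirac_def)
        then show ?thesis using h by simp
      next
        assume h: "u j \<in> {xb1..xb2} \<and> u j \<noteq> x1s \<and> M0 (u j) {c j..c j + y j} = mu0_left psi phi (u j) {c j..c j + y j}"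
        have "{min (psi (u j)) (phi (u j))..max (psi (u j)) (phi (u j))} \<subseteq> per {c j..c j + y j}"
          using elim Jsub by blast
        then show ?thesis using ml_in h by simp
      qed
      then show ?case using M0_bnd[of x1s "{c0..<c0+y0}"] e by simp
    qed
  next
    case False
    then have z: "M0 x1s {c0..<c0+y0} = 0" using M0x by (simp add: dirac_def)
    show ?thesis
    proof (rule always_eventually, rule allI)
      fix j show "M0 (u j) {c j..c j + y j} > M0 x1s {c0..<c0+y0} - e"
        using z M0_bnd(1)[of "u j" "{c j..c j + y j}"] e by linarith
    qed
  qed
  show "eventually (\<lambda>j. M0 (u j) {c j..c j + y j} < M0 x1s {c0..c0+y0} + e) sequentially"
  proof (cases "y1s \<in> per {c0..c0+y0}")
    case True
    then have z: "M0 x1s {c0..c0+y0} = 1" using M0x by (simp add: dirac_def)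
    show ?thesis
    proof (rule always_eventually, rule allI)
      fix j show "M0 (u j) {c j..c j + y j} < M0 x1s {c0..c0+y0} + e"
        using z M0_bnd(2)[of "u j" "{c j..c j + y j}"] e by linarith
    qed
  next
    case False
    then have "frac (a - c0) > y0" using per_Icc_iff[of y0 y1s c0] y0 fa by auto
    from atom_frac(2)[OF atom' c y yr e'0 this] ev1
    show ?thesis
    proof eventually_elim
      case (elim j)
      have "M0 (u j) {c j..c j + y j} = 0"
        using br[OF elim(2), of "{c j..c j + y j}"]
      proof
        assume "u j = x1s \<and> M0 (u j) {c j..c j + y j} = dirac y1s {c j..c j + y j}"
        then have h: "M0 (u j) {c j..c j + y j} = dirac y1s {c j..c j + y j}" by blast
        have "a \<notin> per {c j..c j + y j}" using elim e'pos by auto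
        then have "dirac y1s {c j..c j + y j} = 0" using mem[of "{c j..c j + y j}"] by (simp add: dirac_def)
        then show ?thesis using h by simp
      next
        assume h: "u j \<in> {xb1..xb2} \<and> u j \<noteq> x1s \<and> M0 (u j) {c j..c j + y j} = mu0_left psi phi (u j) {c j..c j + y j}"
        have "{min (psi (u j)) (phi (u j))..max (psi (u j)) (phi (u j))} \<inter> per {c j..c j + y j} = {}"
          using elim Jsub by blast
        then show ?thesis using ml_out h by simp
      qed
      then show ?case using M0x False e by (simp add: dirac_def)
    qed
  qed
qed


lemma atomic2:
  assumes u: "u \<longlonglongrightarrow> x1s + 1/2" and c: "c \<longlonglongrightarrow> c0" and y: "y \<longlonglongrightarrow> y0"
    and yr: "\<And>j. y j \<in> {0..1}" and y0: "y0 \<in> {0..1}"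
    and atom: "frac (1 - y1s - c0) \<noteq> 0" and e: "e > 0"
  shows "eventually (\<lambda>j. M0 (u j) {c j..c j + y j} > M0 (x1s + 1/2) {c0..<c0+y0} - e) sequentially"
    and "eventually (\<lambda>j. M0 (u j) {c j..c j + y j} < M0 (x1s + 1/2) {c0..c0+y0} + e) sequentially"
proof -
  define a where "a = 1 - psi x1s"
  obtain k :: int where k0: "psi x1s = y1s + of_int k" using psi_int by blast
  have k: "a = (1 - y1s) + of_int (-k)" using k0 by (simp add: a_def)
  have e1: "a - c0 = (1 - y1s - c0) + of_int (-k)" using k by linarith
  have fa: "frac (a - c0) = frac (1 - y1s - c0)"
    unfolding e1 by (rule frac_add_of_int_right)
  have mem: "1 - y1s \<in> per A \<longleftrightarrow> a \<in> per A" for A using per_shift_int[of "1 - y1s" "-k" A] k by simp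
  have fx: "frac (x1s + 1/2) = x1s + 1/2" using xb by (intro frac_small) auto
  have M0x: "M0 (x1s + 1/2) A = dirac (1 - y1s) A" for A using V_A2[of "x1s + 1/2"] fx by simp
  define e' where "e' j = (if u j - 1/2 \<in> {xb1..xb2} then max \<bar>psi (u j - 1/2) - psi x1s\<bar> \<bar>phi (u j - 1/2) - psi x1s\<bar> else 0)" for j
  have uw: "(\<lambda>j. u j - 1/2) \<longlonglongrightarrow> x1s" using tendsto_diff[OF u tendsto_const[of "1/2"]] by simp
  have e'0: "e' \<longlonglongrightarrow> 0" unfolding e'_def by (rule e_tendsto[OF uw])
  have ev1: "eventually (\<lambda>j. u j \<in> {xb1 + 1/2<..<xb2 + 1/2}) sequentially"
    using xb by (intro ev_open[OF u]) auto
  have atom': "frac (a - c0) \<noteq> 0" using atom fa by simp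
  have Jsub: "s \<in> {min (psi (u j - 1/2)) (phi (u j - 1/2))..max (psi (u j - 1/2)) (phi (u j - 1/2))}
     \<Longrightarrow> u j \<in> {xb1 + 1/2<..<xb2 + 1/2} \<Longrightarrow> \<bar>(1 - s) - a\<bar> \<le> e' j" for s j
    using minmax_close[of s "psi (u j - 1/2)" "phi (u j - 1/2)" "psi x1s"] by (auto simp: e'_def a_def)
  have e'pos: "u j \<in> {xb1 + 1/2<..<xb2 + 1/2} \<Longrightarrow> 0 \<le> e' j" for j by (auto simp: e'_def)
  have br: "u j \<in> {xb1 + 1/2<..<xb2 + 1/2} \<Longrightarrow> (M0 (u j) A = dirac (1 - y1s) A) \<or>
      (u j - 1/2 \<in> {xb1..xb2} \<and> u j - 1/2 \<noteq> x1s \<and> M0 (u j) A = mu0_left psi phi (u j - 1/2) ((\<lambda>y. 1 - y) ` A))" for j A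
  proof -
    assume h: "u j \<in> {xb1 + 1/2<..<xb2 + 1/2}"
    then have f: "frac (u j) = u j" using xb by (intro frac_small) auto
    show ?thesis
    proof (cases "u j = x1s + 1/2")
      case True then show ?thesis using M0x by simp
    next
      case False then show ?thesis using V_R'[of "u j" A] f h by (auto simp: inR_def)
    qed
  qed
  show "eventually (\<lambda>j. M0 (u j) {c j..c j + y j} > M0 (x1s + 1/2) {c0..<c0+y0} - e) sequentially"
  proof (cases "1 - y1s \<in> per {c0..<c0+y0}")
    case True
    then have "frac (a - c0) < y0" using per_Ico_iff[of y0 "1 - y1s" c0] y0 fa by auto
    from atom_frac(1)[OF atom' c y yr e'0 this] ev1
    show ?thesis
    proof eventually_elim
      case (elim j)
      have "M0 (u j) {c j..c j + y j} = 1"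
        using br[OF elim(2), of "{c j..c j + y j}"]
      proof
        assume h: "M0 (u j) {c j..c j + y j} = dirac (1 - y1s) {c j..c j + y j}"
        have "a \<in> per {c j..c j + y j}" using elim e'pos by auto
        then have "dirac (1 - y1s) {c j..c j + y j} = 1" using mem[of "{c j..c j + y j}"] by (simp add: dirac_def)
        then show ?thesis using h by simp
      next
        assume h: "u j - 1/2 \<in> {xb1..xb2} \<and> u j - 1/2 \<noteq> x1s \<and>
          M0 (u j) {c j..c j + y j} = mu0_left psi phi (u j - 1/2) ((\<lambda>y. 1 - y) ` {c j..c j + y j})"
        have "{min (psi (u j - 1/2)) (phi (u j - 1/2))..max (psi (u j - 1/2)) (phi (u j - 1/2))}
            \<subseteq> per ((\<lambda>y. 1 - y) ` {c j..c j + y j})"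
        proof
          fix s assume "s \<in> {min (psi (u j - 1/2)) (phi (u j - 1/2))..max (psi (u j - 1/2)) (phi (u j - 1/2))}"
          then have "\<bar>(1 - s) - a\<bar> \<le> e' j" using Jsub elim(2) by blast
          then have "1 - s \<in> per {c j..c j + y j}" using elim(1) by blast
          then show "s \<in> per ((\<lambda>y. 1 - y) ` {c j..c j + y j})" using per_refl by blast
        qed
        then show ?thesis using ml_in h by simp
      qed
      then show ?case using M0_bnd[of "x1s + 1/2" "{c0..<c0+y0}"] e by simp
    qed
  next
    case False
    then have z: "M0 (x1s + 1/2) {c0..<c0+y0} = 0" using M0x by (simp add: dirac_def)
    show ?thesis
    proof (rule always_eventually, rule allI)
      fix j show "M0 (u j) {c j..c j + y j} > M0 (x1s + 1/2) {c0..<c0+y0} - e"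
        using z M0_bnd(1)[of "u j" "{c j..c j + y j}"] e by linarith
    qed
  qed
  show "eventually (\<lambda>j. M0 (u j) {c j..c j + y j} < M0 (x1s + 1/2) {c0..c0+y0} + e) sequentially"
  proof (cases "1 - y1s \<in> per {c0..c0+y0}")
    case True
    then have z: "M0 (x1s + 1/2) {c0..c0+y0} = 1" using M0x by (simp add: dirac_def)
    show ?thesis
    proof (rule always_eventually, rule allI)
      fix j show "M0 (u j) {c j..c j + y j} < M0 (x1s + 1/2) {c0..c0+y0} + e"
        using z M0_bnd(2)[of "u j" "{c j..c j + y j}"] e by linarith
    qed
  next
    case False
    then have "frac (a - c0) > y0" using per_Icc_iff[of y0 "1 - y1s" c0] y0 fa by auto
    from atom_frac(2)[OF atom' c y yr e'0 this] ev1
    show ?thesis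
    proof eventually_elim
      case (elim j)
      have "M0 (u j) {c j..c j + y j} = 0"
        using br[OF elim(2), of "{c j..c j + y j}"]
      proof
        assume h: "M0 (u j) {c j..c j + y j} = dirac (1 - y1s) {c j..c j + y j}"
        have "a \<notin> per {c j..c j + y j}" using elim e'pos by auto
        then have "dirac (1 - y1s) {c j..c j + y j} = 0" using mem[of "{c j..c j + y j}"] by (simp add: dirac_def)
        then show ?thesis using h by simp
      next
        assume h: "u j - 1/2 \<in> {xb1..xb2} \<and> u j - 1/2 \<noteq> x1s \<and>
          M0 (u j) {c j..c j + y j} = mu0_left psi phi (u j - 1/2) ((\<lambda>y. 1 - y) ` {c j..c j + y j})"
        have "{min (psi (u j - 1/2)) (phi (u j - 1/2))..max (psi (u j - 1/2)) (phi (u j - 1/2))}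
            \<inter> per ((\<lambda>y. 1 - y) ` {c j..c j + y j}) = {}"
        proof (rule equals0I)
          fix s assume s: "s \<in> {min (psi (u j - 1/2)) (phi (u j - 1/2))..max (psi (u j - 1/2)) (phi (u j - 1/2))}
            \<inter> per ((\<lambda>y. 1 - y) ` {c j..c j + y j})"
          then have "\<bar>(1 - s) - a\<bar> \<le> e' j" using Jsub elim(2) by blast
          then have "1 - s \<notin> per {c j..c j + y j}" using elim(1) by blast
          moreover have "1 - s \<in> per {c j..c j + y j}" using s per_refl by blast
          ultimately show False by blast
        qed
        then show ?thesis using ml_out h by simp
      qed
      then show ?case using M0x False e by (simp add: dirac_def)
    qed
  qed
qed


lemma M0_semicont:
  assumes u: "u \<longlonglongrightarrow> u0" and c: "c \<longlonglongrightarrow> c0" and y: "y \<longlonglongrightarrow> y0"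
    and yr: "\<And>j. y j \<in> {0..1}" and y0: "y0 \<in> {0..1}"
    and a1: "frac u0 = x1s \<Longrightarrow> frac (y1s - c0) \<noteq> 0"
    and a2: "frac u0 = x1s + 1/2 \<Longrightarrow> frac (1 - y1s - c0) \<noteq> 0" and e: "e > 0"
  shows "eventually (\<lambda>j. M0 (u j) {c j..c j + y j} > M0 u0 {c0..<c0+y0} - e) sequentially"
    and "eventually (\<lambda>j. M0 (u j) {c j..c j + y j} < M0 u0 {c0..c0+y0} + e) sequentially"
proof -
  define m where "m = \<lfloor>u0\<rfloor>"
  define w where "w j = u j - of_int m" for j
  define v0 where "v0 = frac u0"
  have wv: "w \<longlonglongrightarrow> v0" unfolding w_def v0_def frac_def m_def by (intro tendsto_diff u tendsto_const)
  have Mw: "M0 (u j) A = M0 (w j) A" for j A using M0_per[of "w j" m A] by (simp add: w_def)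
  have Mv: "M0 u0 A = M0 v0 A" for A using M0_per[of v0 m A] by (simp add: v0_def m_def frac_def)
  have v01: "0 \<le> v0" "v0 < 1" by (auto simp: v0_def frac_lt_1)
  have fv: "frac v0 = v0" using v01 by (rule frac_small)
  have "eventually (\<lambda>j. M0 (w j) {c j..c j + y j} > M0 v0 {c0..<c0+y0} - e) sequentially \<and>
        eventually (\<lambda>j. M0 (w j) {c j..c j + y j} < M0 v0 {c0..c0+y0} + e) sequentially"
  proof (cases "v0 = x1s")
    case True
    then show ?thesis using atomic1[OF wv[unfolded True] c y yr y0 a1 e] True by (simp add: v0_def)
  next
    case F1: False
    show ?thesis
    proof (cases "v0 = x1s + 1/2")
      case True
      then show ?thesis using atomic2[OF wv[unfolded True] c y yr y0 a2 e] True by (simp add: v0_def)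
    next
      case False
      have lim: "(\<lambda>j. M0 (w j) {c j..c j + y j}) \<longlonglongrightarrow> M0 v0 {c0..c0+y0}"
        by (rule nonatomic[OF wv c y yr y0 v01 F1 False])
      have eq: "M0 v0 {c0..<c0+y0} = M0 v0 {c0..c0+y0}" by (rule nonatomic_Ico[OF y0 v01 F1 False])
      from tendstoD[OF lim e] have "eventually (\<lambda>j. \<bar>M0 (w j) {c j..c j + y j} - M0 v0 {c0..c0+y0}\<bar> < e) sequentially"
        by (simp add: dist_real_def)
      then show ?thesis unfolding eq by (auto elim: eventually_mono)
    qed
  qed
  then show "eventually (\<lambda>j. M0 (u j) {c j..c j + y j} > M0 u0 {c0..<c0+y0} - e) sequentially"
    and "eventually (\<lambda>j. M0 (u j) {c j..c j + y j} < M0 u0 {c0..c0+y0} + e) sequentially"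
    by (simp_all add: Mw Mv)
qed


abbreviation "Mn \<equiv> mun \<alpha> r xb1 xb2 x1s y1s psi phi"
abbreviation "coc \<equiv> cocycle \<alpha> r"

lemma r_nat: "r (x + of_nat n) = r x"
  by (induction n arbitrary: x) (simp_all add: r_per add.assoc[symmetric])

lemma r_int: "r (x + of_int m) = r x"
proof (cases "m \<ge> 0")
  case True
  then show ?thesis using r_nat[of x "nat m"] by simp
next
  case False
  then have "r (x + of_int m) = r ((x + of_int m) + of_nat (nat (- m)))" using r_nat by presburger
  also have "\<dots> = r x" using False by simp
  finally show ?thesis .
qed

lemma coc_int: "coc n (x + of_int m) = coc n x"
  unfolding cocycle_def
proof (rule sum.cong[OF refl])
  fix k show "r (x + of_int m + real k * \<alpha>) = r (x + real k * \<alpha>)"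
    using r_int[of "x + real k * \<alpha>" m] by (simp add: algebra_simps)
qed

lemma Sinv_pow: "(Sinv \<alpha> r ^^ n) (x, y) = (x - real n * \<alpha>, y - coc n (x - real n * \<alpha>))"
proof (induction n)
  case 0 then show ?case by (simp add: cocycle_def)
next
  case (Suc n)
  have "coc (Suc n) (x - real (Suc n) * \<alpha>) = r (x - real (Suc n) * \<alpha>) + coc n (x - real n * \<alpha>)"
    unfolding cocycle_def sum.lessThan_Suc_shift
    by (simp add: algebra_simps)
  then show ?case using Suc by (simp add: Sinv_def algebra_simps)
qed

lemma Spow_neg: "Spow \<alpha> r (- int n) z = (Sinv \<alpha> r ^^ n) z"
  by (cases "n = 0") (auto simp: Spow_def)

lemma atom_cond:
  assumes "frac (x0 + real n * \<alpha>) = x1s + d" "(x1s + d, y') \<in> {(x1s, y1s), (x1s + 1/2, 1 - y1s)}"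
  shows "frac (y' - coc n x0) \<noteq> 0"
proof -
  define m where "m = \<lfloor>x0 + real n * \<alpha>\<rfloor>"
  have "x0 = (x1s + d - real n * \<alpha>) + of_int m" using assms(1) by (simp add: frac_def m_def)
  then have cx: "coc n x0 = coc n (x1s + d - real n * \<alpha>)" using coc_int by metis
  have "frac (snd (Spow \<alpha> r (- int n) (x1s + d, y'))) \<noteq> 0" using orbit[OF assms(2)] .
  then show ?thesis unfolding Spow_neg Sinv_pow cx by simp
qed

lemma coc_tendsto: "x \<longlonglongrightarrow> x0 \<Longrightarrow> (\<lambda>j. coc n (x j)) \<longlonglongrightarrow> coc n x0"
  unfolding cocycle_def
  by (intro tendsto_intros continuous_on_tendsto_compose[OF r_cont]) auto

lemma mun_Icc: "Mn n x {0..y} = M0 (x + real n * \<alpha>) {coc n x..coc n x + y}"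
  unfolding mun_def shift_Icc by (simp add: add.commute)

lemma mun_Ico: "Mn n x {0..<y} = M0 (x + real n * \<alpha>) {coc n x..<coc n x + y}"
  unfolding mun_def shift_Ico by (simp add: add.commute)

lemma mun_int: "Mn n (x + of_int m) A = Mn n x A"
proof -
  have "M0 (x + of_int m + real n * \<alpha>) B = M0 (x + real n * \<alpha>) B" for B
    using M0_per[of "x + real n * \<alpha>" m B] by (simp add: algebra_simps)
  then show ?thesis unfolding mun_def coc_int by simp
qed

lemma mun_semicont:
  assumes xs: "(\<lambda>j. tdist (xs j) x0) \<longlonglongrightarrow> 0" and y: "ys \<longlonglongrightarrow> y0"
    and yr: "\<And>j. ys j \<in> {0..1}" and y0: "y0 \<in> {0..1}" and e: "e > 0"
  shows "eventually (\<lambda>j. Mn n (xs j) {0..ys j} > Mn n x0 {0..<y0} - e) sequentially"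
    and "eventually (\<lambda>j. Mn n (xs j) {0..ys j} < Mn n x0 {0..y0} + e) sequentially"
proof -
  define x' where "x' j = xs j - of_int (round (xs j - x0))" for j
  have "(\<lambda>j. x' j - x0) \<longlonglongrightarrow> 0"
    using xs unfolding tdist_def x'_def by (simp add: tendsto_rabs_zero_iff algebra_simps)
  then have x': "x' \<longlonglongrightarrow> x0" by (rule LIM_zero_cancel)
  have eqx: "Mn n (xs j) A = Mn n (x' j) A" for j A
    using mun_int[of n "x' j" "round (xs j - x0)" A] by (simp add: x'_def)
  have u: "(\<lambda>j. x' j + real n * \<alpha>) \<longlonglongrightarrow> x0 + real n * \<alpha>" by (intro tendsto_intros x')
  have c: "(\<lambda>j. coc n (x' j)) \<longlonglongrightarrow> coc n x0" by (rule coc_tendsto[OF x'])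
  have a1: "frac (x0 + real n * \<alpha>) = x1s \<Longrightarrow> frac (y1s - coc n x0) \<noteq> 0"
    using atom_cond[of x0 n 0 y1s] by simp
  have a2: "frac (x0 + real n * \<alpha>) = x1s + 1/2 \<Longrightarrow> frac (1 - y1s - coc n x0) \<noteq> 0"
    using atom_cond[of x0 n "1/2" "1 - y1s"] by simp
  note M = M0_semicont[OF u c y yr y0 a1 a2 e]
  show "eventually (\<lambda>j. Mn n (xs j) {0..ys j} > Mn n x0 {0..<y0} - e) sequentially"
    using M(1) unfolding eqx by (simp add: mun_Icc mun_Ico)
  show "eventually (\<lambda>j. Mn n (xs j) {0..ys j} < Mn n x0 {0..y0} + e) sequentially"
    using M(2) unfolding eqx by (simp add: mun_Icc)
qed


abbreviation "Mu \<equiv> mu \<alpha> r xb1 xb2 x1s y1s psi phi"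

lemma Mn_bnd: "0 \<le> Mn n x A \<and> Mn n x A \<le> 1"
  unfolding mun_def using M0_bnd by auto

lemma mu_semicont:
  assumes xs: "(\<lambda>j. tdist (xs j) x0) \<longlonglongrightarrow> 0" and y: "ys \<longlonglongrightarrow> y0"
    and yr: "\<And>j. ys j \<in> {0..1}" and y0: "y0 \<in> {0..1}" and e: "e > 0"
  shows "eventually (\<lambda>j. Mu (xs j) {0..ys j} > Mu x0 {0..<y0} - e) sequentially"
    and "eventually (\<lambda>j. Mu (xs j) {0..ys j} < Mu x0 {0..y0} + e) sequentially"
proof -
  have lj: "leb {0..ys j} = ys j" for j using leb_Icc[of "ys j" 0] yr[of j] by simp
  have l0: "leb {0..y0} = y0" using leb_Icc[of y0 0] y0 by simp
  have l0': "leb {0..<y0} = y0" using leb_Ico[of y0 0] y0 by simp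
  have S1: "eventually (\<lambda>j. (\<Sum>n. (1/2)^(n+1) * Mn n (xs j) {0..ys j}) > (\<Sum>n. (1/2)^(n+1) * Mn n x0 {0..<y0}) - e) sequentially"
    by (rule series_lower[OF Mn_bnd Mn_bnd mun_semicont(1)[OF xs y yr y0] e])
  have S2: "eventually (\<lambda>j. (\<Sum>n. (1/2)^(n+1) * Mn n (xs j) {0..ys j}) < (\<Sum>n. (1/2)^(n+1) * Mn n x0 {0..y0}) + e) sequentially"
    by (rule series_upper[OF Mn_bnd Mn_bnd mun_semicont(2)[OF xs y yr y0] e])
  have Y: "eventually (\<lambda>j. \<bar>ys j - y0\<bar> < e) sequentially"
    using tendstoD[OF y e] by (simp add: dist_real_def)
  show "eventually (\<lambda>j. Mu (xs j) {0..ys j} > Mu x0 {0..<y0} - e) sequentially"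
    using S1 Y by eventually_elim (unfold mu_def lj l0', rule lin1)
  show "eventually (\<lambda>j. Mu (xs j) {0..ys j} < Mu x0 {0..y0} + e) sequentially"
    using S2 Y by eventually_elim (unfold mu_def lj l0, rule lin2)
qed

lemma Mn_Un: "A \<in> sets borel \<Longrightarrow> B \<in> sets borel \<Longrightarrow> Mn n x (A \<union> B) \<le> Mn n x A + Mn n x B"
  unfolding mun_def image_Un by (intro M0_Un shift_borel)

lemma Mu_nonneg: "0 \<le> Mu x A"
proof -
  have "0 \<le> (\<Sum>n. (1/2::real)^(n+1) * Mn n x A)"
    using Mn_bnd by (intro suminf_nonneg wsum(1)) auto
  then show ?thesis using leb_nonneg[of A] by (simp add: mu_def)
qed

lemma Mu_Un:
  assumes "A \<in> sets borel" "B \<in> sets borel"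
  shows "Mu x (A \<union> B) \<le> Mu x A + Mu x B"
proof -
  let ?f = "\<lambda>C n. (1/2::real)^(n+1) * Mn n x C"
  have s: "summable (?f C)" for C using Mn_bnd by (intro wsum(1)) auto
  have "suminf (?f (A \<union> B)) \<le> suminf (\<lambda>n. ?f A n + ?f B n)"
  proof (rule suminf_le)
    show "?f (A \<union> B) n \<le> ?f A n + ?f B n" for n
      using Mn_Un[OF assms, of n x] by (simp add: distrib_left[symmetric])
    show "summable (?f (A \<union> B))" by (rule s)
    show "summable (\<lambda>n. ?f A n + ?f B n)" by (intro summable_add s)
  qed
  also have "\<dots> = suminf (?f A) + suminf (?f B)" by (intro suminf_add[symmetric] s)
  finally show ?thesis unfolding mu_def by (rule lin3[OF leb_Un[OF assms]])
qed

lemma Mu_split: "0 \<le> y \<Longrightarrow> Mu x {0..y} \<le> Mu x {0..<y} + Mu x {y}"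
proof -
  assume "0 \<le> y"
  then have "{0..y} = {0..<y} \<union> {y}" by auto
  then show ?thesis using Mu_Un[of "{0..<y}" "{y}" x] by simp
qed

end

theorem corollary3:
  fixes \<alpha> :: real and r :: "real \<Rightarrow> real"
    and x1s y1s xb1 xb2 :: real and psi phi :: "real \<Rightarrow> real"
  assumes irr: "\<alpha> \<notin> \<rat>"
    and r_cont: "continuous_on UNIV r"
    and r_per: "\<And>x. r (x + 1) = r x"
    and r_anti: "\<And>x. r (x + 1/2) = - r x"
    and r_0: "r 0 = 0" and r_half: "r (1/2) = 0"
    and r_pos: "\<And>x. 0 < x \<Longrightarrow> x < 1/2 \<Longrightarrow> 0 < r x \<and> r x < 1/4"
    and minimal: "minimal_S \<alpha> r"
    and x1s: "x1s \<in> \<rat>" "0.1 < x1s" "x1s < 0.2"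
    and orbit: "\<And>m::int. \<And>z. z \<in> {(x1s, y1s), (x1s + 1/2, 1 - y1s)} \<Longrightarrow>
                  frac (snd (Spow \<alpha> r m z)) \<noteq> 0
                  \<and> frac (snd (Spow \<alpha> r m z) + r (fst (Spow \<alpha> r m z))) \<noteq> 0"
    and xb: "xb1 < x1s" "x1s < xb2" "0 < xb1" "xb2 < 1/2"
    and psi_cont: "continuous_on {xb1..xb2} psi"
    and phi_cont: "continuous_on {xb1..xb2} phi"
    and psi_range: "\<And>x. x \<in> {xb1..xb2} \<Longrightarrow> psi x \<in> {0..1}"
    and phi_range: "\<And>x. x \<in> {xb1..xb2} \<Longrightarrow> phi x \<in> {0..1}"
    and bd: "psi xb1 = 0" "phi xb1 = 1" "psi xb2 = 1" "phi xb2 = 0"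
    and lt: "\<And>x. x \<in> {xb1..<x1s} \<Longrightarrow> psi x < phi x"
    and gt: "\<And>x. x \<in> {x1s<..xb2} \<Longrightarrow> psi x > phi x"
    and eq: "psi x1s = phi x1s" "frac (psi x1s) = frac y1s"
  shows
   "(\<forall>(xs :: nat \<Rightarrow> real) (ys :: nat \<Rightarrow> real) x0 y0.
       (\<lambda>j. tdist (xs j) x0) \<longlonglongrightarrow> 0 \<and> ys \<longlonglongrightarrow> y0
       \<and> (\<forall>j. ys j \<in> {0..1}) \<and> y0 \<in> {0..1} \<longrightarrow>
       (\<forall>n::nat.
          ereal (mun \<alpha> r xb1 xb2 x1s y1s psi phi n x0 {0..<y0})
            \<le> liminf (\<lambda>j. ereal (mun \<alpha> r xb1 xb2 x1s y1s psi phi n (xs j) {0..ys j}))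
          \<and> liminf (\<lambda>j. ereal (mun \<alpha> r xb1 xb2 x1s y1s psi phi n (xs j) {0..ys j}))
            \<le> limsup (\<lambda>j. ereal (mun \<alpha> r xb1 xb2 x1s y1s psi phi n (xs j) {0..ys j}))
          \<and> limsup (\<lambda>j. ereal (mun \<alpha> r xb1 xb2 x1s y1s psi phi n (xs j) {0..ys j}))
            \<le> ereal (mun \<alpha> r xb1 xb2 x1s y1s psi phi n x0 {0..y0}))
       \<and> ereal (mu \<alpha> r xb1 xb2 x1s y1s psi phi x0 {0..<y0})
            \<le> liminf (\<lambda>j. ereal (mu \<alpha> r xb1 xb2 x1s y1s psi phi (xs j) {0..ys j}))
       \<and> liminf (\<lambda>j. ereal (mu \<alpha> r xb1 xb2 x1s y1s psi phi (xs j) {0..ys j}))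
            \<le> limsup (\<lambda>j. ereal (mu \<alpha> r xb1 xb2 x1s y1s psi phi (xs j) {0..ys j}))
       \<and> limsup (\<lambda>j. ereal (mu \<alpha> r xb1 xb2 x1s y1s psi phi (xs j) {0..ys j}))
            \<le> ereal (mu \<alpha> r xb1 xb2 x1s y1s psi phi x0 {0..y0}))
    \<and> (\<forall>x0 y0. y0 \<in> {0..1} \<and>
         \<not> (\<forall>e>0. \<exists>d>0. \<forall>x y. y \<in> {0..1} \<and> tdist x x0 < d \<and> \<bar>y - y0\<bar> < d \<longrightarrow>
               \<bar>mu \<alpha> r xb1 xb2 x1s y1s psi phi x {0..y}
                 - mu \<alpha> r xb1 xb2 x1s y1s psi phi x0 {0..y0}\<bar> < e)
       \<longrightarrow> mu \<alpha> r xb1 xb2 x1s y1s psi phi x0 {y0} > 0)"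
proof -
  interpret SP \<alpha> r x1s y1s xb1 xb2 psi phi
    using r_cont r_per xb psi_cont phi_cont psi_range phi_range bd lt gt eq orbit
    by unfold_locales auto
  have P1: "\<forall>(xs :: nat \<Rightarrow> real) (ys :: nat \<Rightarrow> real) x0 y0.
       (\<lambda>j. tdist (xs j) x0) \<longlonglongrightarrow> 0 \<and> ys \<longlonglongrightarrow> y0
       \<and> (\<forall>j. ys j \<in> {0..1}) \<and> y0 \<in> {0..1} \<longrightarrow>
       (\<forall>n::nat.
          ereal (Mn n x0 {0..<y0}) \<le> liminf (\<lambda>j. ereal (Mn n (xs j) {0..ys j}))
          \<and> liminf (\<lambda>j. ereal (Mn n (xs j) {0..ys j})) \<le> limsup (\<lambda>j. ereal (Mn n (xs j) {0..ys j}))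
          \<and> limsup (\<lambda>j. ereal (Mn n (xs j) {0..ys j})) \<le> ereal (Mn n x0 {0..y0}))
       \<and> ereal (Mu x0 {0..<y0}) \<le> liminf (\<lambda>j. ereal (Mu (xs j) {0..ys j}))
       \<and> liminf (\<lambda>j. ereal (Mu (xs j) {0..ys j})) \<le> limsup (\<lambda>j. ereal (Mu (xs j) {0..ys j}))
       \<and> limsup (\<lambda>j. ereal (Mu (xs j) {0..ys j})) \<le> ereal (Mu x0 {0..y0})"
  proof (intro allI impI)
    fix xs ys :: "nat \<Rightarrow> real" and x0 y0 :: real
    assume h: "(\<lambda>j. tdist (xs j) x0) \<longlonglongrightarrow> 0 \<and> ys \<longlonglongrightarrow> y0 \<and> (\<forall>j. ys j \<in> {0..1}) \<and> y0 \<in> {0..1}"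
    then have xs: "(\<lambda>j. tdist (xs j) x0) \<longlonglongrightarrow> 0" and ys: "ys \<longlonglongrightarrow> y0"
      and yr: "\<And>j. ys j \<in> {0..1}" and y0: "y0 \<in> {0..1}" by auto
    have LL: "Liminf sequentially f \<le> Limsup sequentially f" for f :: "nat \<Rightarrow> ereal"
      by (rule Liminf_le_Limsup) simp
    show "(\<forall>n::nat.
          ereal (Mn n x0 {0..<y0}) \<le> liminf (\<lambda>j. ereal (Mn n (xs j) {0..ys j}))
          \<and> liminf (\<lambda>j. ereal (Mn n (xs j) {0..ys j})) \<le> limsup (\<lambda>j. ereal (Mn n (xs j) {0..ys j}))
          \<and> limsup (\<lambda>j. ereal (Mn n (xs j) {0..ys j})) \<le> ereal (Mn n x0 {0..y0}))
       \<and> ereal (Mu x0 {0..<y0}) \<le> liminf (\<lambda>j. ereal (Mu (xs j) {0..ys j}))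
       \<and> liminf (\<lambda>j. ereal (Mu (xs j) {0..ys j})) \<le> limsup (\<lambda>j. ereal (Mu (xs j) {0..ys j}))
       \<and> limsup (\<lambda>j. ereal (Mu (xs j) {0..ys j})) \<le> ereal (Mu x0 {0..y0})"
      using ereal_liminf_ge[OF mun_semicont(1)[OF xs ys yr y0]]
        ereal_limsup_le[OF mun_semicont(2)[OF xs ys yr y0]]
        ereal_liminf_ge[OF mu_semicont(1)[OF xs ys yr y0]]
        ereal_limsup_le[OF mu_semicont(2)[OF xs ys yr y0]] LL
      by blast
  qed
  have P2: "\<forall>x0 y0. y0 \<in> {0..1} \<and>
         \<not> (\<forall>e>0. \<exists>d>0. \<forall>x y. y \<in> {0..1} \<and> tdist x x0 < d \<and> \<bar>y - y0\<bar> < d \<longrightarrow>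
               \<bar>Mu x {0..y} - Mu x0 {0..y0}\<bar> < e)
       \<longrightarrow> Mu x0 {y0} > 0"
  proof (intro allI impI)
    fix x0 y0 :: real
    assume h: "y0 \<in> {0..1} \<and>
         \<not> (\<forall>e>0. \<exists>d>0. \<forall>x y. y \<in> {0..1} \<and> tdist x x0 < d \<and> \<bar>y - y0\<bar> < d \<longrightarrow>
               \<bar>Mu x {0..y} - Mu x0 {0..y0}\<bar> < e)"
    then have y0: "y0 \<in> {0..1}" by blast
    from h obtain e where e: "e > 0" and H: "\<And>d. d > 0 \<Longrightarrow> \<exists>x y. y \<in> {0..1} \<and> tdist x x0 < d \<and> \<bar>y - y0\<bar> < d \<and>
               \<not> \<bar>Mu x {0..y} - Mu x0 {0..y0}\<bar> < e" by blast
    show "Mu x0 {y0} > 0"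
    proof (rule ccontr)
      assume "\<not> Mu x0 {y0} > 0"
      then have z: "Mu x0 {y0} \<le> 0" by simp
      have split: "Mu x0 {0..y0} \<le> Mu x0 {0..<y0}" using Mu_split[of y0 x0] y0 z by simp
      have "\<forall>j. \<exists>p. snd p \<in> {0..1} \<and> tdist (fst p) x0 < inverse (real (Suc j)) \<and>
          \<bar>snd p - y0\<bar> < inverse (real (Suc j)) \<and> \<not> \<bar>Mu (fst p) {0..snd p} - Mu x0 {0..y0}\<bar> < e"
      proof
        fix j
        have "inverse (real (Suc j)) > 0" by simp
        from H[OF this] obtain x y where "y \<in> {0..1} \<and> tdist x x0 < inverse (real (Suc j)) \<and>
            \<bar>y - y0\<bar> < inverse (real (Suc j)) \<and> \<not> \<bar>Mu x {0..y} - Mu x0 {0..y0}\<bar> < e" by blast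
        then show "\<exists>p. snd p \<in> {0..1} \<and> tdist (fst p) x0 < inverse (real (Suc j)) \<and>
          \<bar>snd p - y0\<bar> < inverse (real (Suc j)) \<and> \<not> \<bar>Mu (fst p) {0..snd p} - Mu x0 {0..y0}\<bar> < e"
          by (intro exI[of _ "(x, y)"]) simp
      qed
      from choice[OF this] obtain F where F: "\<And>j. snd (F j) \<in> {0..1} \<and> tdist (fst (F j)) x0 < inverse (real (Suc j)) \<and>
          \<bar>snd (F j) - y0\<bar> < inverse (real (Suc j)) \<and> \<not> \<bar>Mu (fst (F j)) {0..snd (F j)} - Mu x0 {0..y0}\<bar> < e"
        by blast
      define X where "X j = fst (F j)" for j
      define Y where "Y j = snd (F j)" for j
      have yr: "\<And>j. Y j \<in> {0..1}" using F by (simp add: Y_def)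
      have tX: "(\<lambda>j. tdist (X j) x0) \<longlonglongrightarrow> 0"
      proof (rule Lim_null_comparison[OF _ LIMSEQ_inverse_real_of_nat])
        show "eventually (\<lambda>j. norm (tdist (X j) x0) \<le> inverse (real (Suc j))) sequentially"
          using F by (intro always_eventually allI) (simp add: X_def tdist_def less_imp_le)
      qed
      have "(\<lambda>j. Y j - y0) \<longlonglongrightarrow> 0"
      proof (rule Lim_null_comparison[OF _ LIMSEQ_inverse_real_of_nat])
        show "eventually (\<lambda>j. norm (Y j - y0) \<le> inverse (real (Suc j))) sequentially"
          using F by (intro always_eventually allI) (simp add: Y_def less_imp_le)
      qed
      then have tY: "Y \<longlonglongrightarrow> y0" by (rule LIM_zero_cancel)
      from mu_semicont(1)[OF tX tY yr y0 e] mu_semicont(2)[OF tX tY yr y0 e]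
      have "eventually (\<lambda>j. \<bar>Mu (X j) {0..Y j} - Mu x0 {0..y0}\<bar> < e) sequentially"
        by eventually_elim (use split in auto)
      then obtain N where "\<And>j. j \<ge> N \<Longrightarrow> \<bar>Mu (X j) {0..Y j} - Mu x0 {0..y0}\<bar> < e"
        by (auto simp: eventually_sequentially)
      then show False using F[of N] by (simp add: X_def Y_def)
    qed
  qed
  show ?thesis using P1 P2 by blast
qed

end
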